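(* Let $f$ be a smooth probability density on $\mathbb{R}^n$ with respect to $\gamma$ with $\int|x|^2f\,d\gamma<\infty$ and $\mathrm{I}(f)<\infty$. Let $X$ have law $f\,d\gamma$ and assume $\mathbb{E}(X)=0$. Let $N$ be an independent standard Gaussian vector and $X_t=e^{-t}X+\sqrt{1-e^{-2t}}\,N$. Set $$\rho(t)=\sup_{|\alpha|=1}\mathbb{E}\Big(\big[\mathbb{E}(\alpha\cdot X\,|\,X_t)\big]^2\Big),\quad t\ge0.$$ Then $\lim_{t\to\infty}\rho(t)=0$.
   Context: $\gamma$ is the standard Gaussian measure on $\mathbb{R}^n$ and $\mathrm{I}(f)=\int\frac{|\nabla f|^2}{f}d\gamma$. *)

theory Defs
  imports "HOL-Analysis.Analysis" "HOL-Probability.Probability"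
begin

definition std_gauss :: "(real ^ 'n) measure" where
  "std_gauss = density lborel
     (\<lambda>x. ennreal ((2 * pi) powr (- real CARD('n) / 2) * exp (- (norm x)\<^sup>2 / 2)))"

definition grad :: "(real ^ 'n \<Rightarrow> real) \<Rightarrow> real ^ 'n \<Rightarrow> real ^ 'n" where
  "grad f x = (\<chi> i. frechet_derivative f (at x) (axis i 1))"

fun Ck :: "nat \<Rightarrow> (real ^ 'n \<Rightarrow> real) \<Rightarrow> bool" where
  "Ck 0 f = continuous_on UNIV f"
| "Ck (Suc k) f = ((\<forall>x. f differentiable (at x)) \<and>
      (\<forall>i. Ck k (\<lambda>x. frechet_derivative f (at x) (axis i 1))))"

definition smooth :: "(real ^ 'n \<Rightarrow> real) \<Rightarrow> bool" where
  "smooth f = (\<forall>k. Ck k f)"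

definition fisher_info :: "(real ^ 'n \<Rightarrow> real) \<Rightarrow> ennreal" where
  "fisher_info f = (\<integral>\<^sup>+ x. ennreal ((norm (grad f x))\<^sup>2 / f x) \<partial>std_gauss)"

end

theory Submission
  imports Defs
begin

lemma gauss_shift:
  fixes v :: "real ^ 'n"
  shows "distr std_gauss borel (\<lambda>y. y + v) =
         density std_gauss (\<lambda>y. ennreal (exp (y \<bullet> v - (norm v)\<^sup>2 / 2)))"
proof (rule measure_eqI)
  show "sets (distr std_gauss borel (\<lambda>y. y + v)) = sets (density std_gauss (\<lambda>y. ennreal (exp (y \<bullet> v - (norm v)\<^sup>2 / 2))))"
    by (simp add: std_gauss_def)
next
  fix A :: "(real^'n) set" assume "A \<in> sets (distr std_gauss borel (\<lambda>y. y + v))"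
  then have A[measurable]: "A \<in> sets borel" by simp
  have vm: "(\<lambda>y::real^'n. y + v) -` A \<in> sets borel"
    using measurable_sets_borel[of "\<lambda>y::real^'n. y + v" borel A] A by simp
  define C where "C = (2 * pi) powr (- real CARD('n) / 2)"
  have key: "exp (- (norm (v + x))\<^sup>2 / 2) * exp ((v + x) \<bullet> v - (norm v)\<^sup>2 / 2) = exp (- (norm x)\<^sup>2 / 2)" for x :: "real^'n"
  proof -
    have "- (norm (v + x))\<^sup>2 / 2 + ((v + x) \<bullet> v - (norm v)\<^sup>2 / 2) = - (norm x)\<^sup>2 / 2"
      by (simp add: power2_norm_eq_inner inner_add_left inner_add_right inner_commute field_simps)
    then show ?thesis by (simp add: exp_add[symmetric])
  qed
  have key': "ennreal (C * exp (- (norm (v + x))\<^sup>2 / 2)) * ennreal (exp ((v + x) \<bullet> v - (norm v)\<^sup>2 / 2)) = ennreal (C * exp (- (norm x)\<^sup>2 / 2))" for x :: "real^'n"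
  proof -
    have h: "C * exp (- (norm (v + x))\<^sup>2 / 2) * exp ((v + x) \<bullet> v - (norm v)\<^sup>2 / 2) = C * exp (- (norm x)\<^sup>2 / 2)"
      by (simp only: mult.assoc key)
    have "ennreal (C * exp (- (norm (v + x))\<^sup>2 / 2)) * ennreal (exp ((v + x) \<bullet> v - (norm v)\<^sup>2 / 2)) = ennreal (C * exp (- (norm (v + x))\<^sup>2 / 2) * exp ((v + x) \<bullet> v - (norm v)\<^sup>2 / 2))"
      by (rule ennreal_mult[symmetric]) (auto simp: C_def)
    then show ?thesis by (simp only: h)
  qed
  have "emeasure (distr std_gauss borel (\<lambda>y. y + v)) A = emeasure std_gauss ((\<lambda>y. y + v) -` A)"
    by (subst emeasure_distr) (auto simp: std_gauss_def vm)
  also have "\<dots> = (\<integral>\<^sup>+ x. ennreal (C * exp (- (norm x)\<^sup>2 / 2)) * indicator A (x + v) \<partial>lborel)"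
    unfolding std_gauss_def C_def
    by (subst emeasure_density) (auto simp: vm intro!: nn_integral_cong split: split_indicator)
  also have "\<dots> = (\<integral>\<^sup>+ x. ennreal (C * exp (- (norm (v + x))\<^sup>2 / 2)) * ennreal (exp ((v + x) \<bullet> v - (norm v)\<^sup>2 / 2)) * indicator A (v + x) \<partial>lborel)"
    by (intro nn_integral_cong) (simp only: key', simp add: add.commute)
  also have "\<dots> = (\<integral>\<^sup>+ x. ennreal (C * exp (- (norm x)\<^sup>2 / 2)) * ennreal (exp (x \<bullet> v - (norm v)\<^sup>2 / 2)) * indicator A x \<partial>distr lborel borel ((+) v))"
    by (subst nn_integral_distr) (auto simp: C_def)
  also have "\<dots> = (\<integral>\<^sup>+ x. ennreal (C * exp (- (norm x)\<^sup>2 / 2)) * ennreal (exp (x \<bullet> v - (norm v)\<^sup>2 / 2)) * indicator A x \<partial>lborel)"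
    by (simp add: lborel_distr_plus)
  also have "\<dots> = emeasure (density std_gauss (\<lambda>y. ennreal (exp (y \<bullet> v - (norm v)\<^sup>2 / 2)))) A"
    unfolding std_gauss_def C_def
    by (subst emeasure_density) (auto simp: nn_integral_density mult.assoc intro!: nn_integral_cong)
  finally show "emeasure (distr std_gauss borel (\<lambda>y. y + v)) A = emeasure (density std_gauss (\<lambda>y. ennreal (exp (y \<bullet> v - (norm v)\<^sup>2 / 2)))) A" .
qed

abbreviation Ev :: "real^'n \<Rightarrow> real^'n \<Rightarrow> real" where
  "Ev v y \<equiv> exp (y \<bullet> v - (norm v)\<^sup>2 / 2)"

lemma std_gauss_sets[measurable_cong, simp]: "sets std_gauss = sets borel"
  by (simp add: std_gauss_def)

lemma space_std_gauss[simp]: "space std_gauss = UNIV"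
  by (simp add: std_gauss_def)

lemma gauss_shift_nn:
  fixes h :: "real^'n \<Rightarrow> ennreal"
  assumes [measurable]: "h \<in> borel_measurable borel"
  shows "(\<integral>\<^sup>+ y. h (y + v) \<partial>std_gauss) = (\<integral>\<^sup>+ y. ennreal (Ev v y) * h y \<partial>std_gauss)"
proof -
  have "(\<integral>\<^sup>+ y. h (y + v) \<partial>std_gauss) = (\<integral>\<^sup>+ y. h y \<partial>distr std_gauss borel (\<lambda>y. y + v))"
    by (subst nn_integral_distr) auto
  also have "\<dots> = (\<integral>\<^sup>+ y. ennreal (Ev v y) * h y \<partial>std_gauss)"
    by (simp add: gauss_shift nn_integral_density)
  finally show ?thesis .
qed

lemma gauss_shift_int:
  fixes G :: "real^'n \<Rightarrow> real"
  assumes [measurable]: "G \<in> borel_measurable borel"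
  shows "(\<integral> y. G (y + v) \<partial>std_gauss) = (\<integral> y. Ev v y * G y \<partial>std_gauss)"
    and "integrable std_gauss (\<lambda>y. G (y + v)) \<longleftrightarrow> integrable std_gauss (\<lambda>y. Ev v y * G y)"
proof -
  have "(\<integral> y. G (y + v) \<partial>std_gauss) = (\<integral> y. G y \<partial>distr std_gauss borel (\<lambda>y. y + v))"
    by (subst integral_distr) auto
  also have "\<dots> = (\<integral> y. Ev v y * G y \<partial>std_gauss)"
    by (simp add: gauss_shift integral_density)
  finally show "(\<integral> y. G (y + v) \<partial>std_gauss) = (\<integral> y. Ev v y * G y \<partial>std_gauss)" .
  have "integrable std_gauss (\<lambda>y. G (y + v)) \<longleftrightarrow> integrable (distr std_gauss borel (\<lambda>y. y + v)) G"
    by (subst integrable_distr_eq) auto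
  also have "\<dots> \<longleftrightarrow> integrable std_gauss (\<lambda>y. Ev v y * G y)"
    by (simp add: gauss_shift integrable_density)
  finally show "integrable std_gauss (\<lambda>y. G (y + v)) \<longleftrightarrow> integrable std_gauss (\<lambda>y. Ev v y * G y)" .
qed

lemma gauss_exp_lin:
  assumes "prob_space (std_gauss :: (real^'n) measure)"
  shows "integrable (std_gauss :: (real^'n) measure) (\<lambda>y. exp (y \<bullet> v))"
proof -
  interpret prob_space "std_gauss :: (real^'n) measure" by fact
  have "(\<integral>\<^sup>+ y. ennreal (Ev v y) \<partial>(std_gauss :: (real^'n) measure)) = (\<integral>\<^sup>+ y. ennreal (Ev v y) * (\<lambda>_. 1) y \<partial>std_gauss)"
    by simp
  also have "\<dots> = (\<integral>\<^sup>+ y. (\<lambda>_. 1) (y + v) \<partial>std_gauss)"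
    by (rule gauss_shift_nn[symmetric]) simp
  also have "\<dots> = 1" using emeasure_space_1 by simp
  finally have "integrable std_gauss (\<lambda>y. Ev v y)"
    by (intro integrableI_nonneg) auto
  then have "integrable std_gauss (\<lambda>y. exp ((norm v)\<^sup>2 / 2) * Ev v y)"
    by simp
  moreover have "exp ((norm v)\<^sup>2 / 2) * Ev v y = exp (y \<bullet> v)" for y
    by (simp add: exp_add[symmetric])
  ultimately show ?thesis by simp
qed

lemma gauss_exp_norm:
  assumes "prob_space (std_gauss :: (real^'n) measure)"
  shows "integrable (std_gauss :: (real^'n) measure) (\<lambda>y. exp (c * norm y))"
proof -
  define k where "k = \<bar>c\<bar> * real CARD('n)"
  define H where "H y = (\<Sum>i\<in>UNIV. exp (y \<bullet> (k *\<^sub>R axis i 1)) + exp (y \<bullet> (- k *\<^sub>R axis i 1)))" for y :: "real^'n"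
  have intH: "integrable std_gauss H"
    unfolding H_def
    apply (rule Bochner_Integration.integrable_sum)
    apply (rule Bochner_Integration.integrable_add)
     apply (rule gauss_exp_lin[OF assms])
    apply (rule gauss_exp_lin[OF assms])
    done
  have bound: "exp (c * norm y) \<le> H y" for y :: "real^'n"
  proof -
    have "Max (range (\<lambda>i. \<bar>y $ i\<bar>)) \<in> range (\<lambda>i. \<bar>y $ i\<bar>)" by (rule Max_in) auto
    then obtain i0 where e: "\<bar>y $ i0\<bar> = Max (range (\<lambda>i. \<bar>y $ i\<bar>))" by (metis (no_types, lifting) rangeE)
    have i0: "\<bar>y $ i\<bar> \<le> \<bar>y $ i0\<bar>" for i unfolding e by (rule Max_ge) auto
    have "c * norm y \<le> \<bar>c\<bar> * norm y" by (simp add: mult_right_mono)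
    also have "\<dots> \<le> \<bar>c\<bar> * (\<Sum>i\<in>UNIV. \<bar>y $ i\<bar>)"
      by (simp add: mult_left_mono norm_le_l1_cart)
    also have "\<dots> \<le> \<bar>c\<bar> * (\<Sum>i\<in>(UNIV::'n set). \<bar>y $ i0\<bar>)"
      by (intro mult_left_mono sum_mono i0) auto
    also have "\<dots> = k * \<bar>y $ i0\<bar>" by (simp add: k_def)
    finally have "exp (c * norm y) \<le> exp (k * \<bar>y $ i0\<bar>)" by simp
    also have "\<dots> \<le> exp (y \<bullet> (k *\<^sub>R axis i0 1)) + exp (y \<bullet> (- k *\<^sub>R axis i0 1))"
    proof -
      have e1: "y \<bullet> (k *\<^sub>R axis i0 1) = k * y $ i0" and e2: "y \<bullet> (- k *\<^sub>R axis i0 1) = - (k * y $ i0)"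
        by (simp_all add: inner_axis)
      show ?thesis unfolding e1 e2
        by (cases "y $ i0 \<ge> 0") (simp_all add: add_increasing add_increasing2)
    qed
    also have "\<dots> \<le> H y"
      unfolding H_def by (rule member_le_sum[of i0 UNIV "\<lambda>i. exp (y \<bullet> (k *\<^sub>R axis i 1)) + exp (y \<bullet> (- k *\<^sub>R axis i 1))"]) auto
    finally show ?thesis .
  qed
  show ?thesis
  proof (rule Bochner_Integration.integrable_bound[OF intH])
    show "AE y in std_gauss. norm (exp (c * norm y)) \<le> norm (H y)"
    proof (intro AE_I2)
      fix y :: "real^'n"
      have "0 \<le> exp (c * norm y)" by simp
      also have "\<dots> \<le> H y" by (rule bound)
      finally show "norm (exp (c * norm y)) \<le> norm (H y)" using bound[of y] by simp
    qed
  qed simp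
qed

definition Jf :: "real \<Rightarrow> real^'n \<Rightarrow> real" where
  "Jf b y = exp (b * norm y + b\<^sup>2) * (exp (b * norm y + b\<^sup>2) - 1)\<^sup>2"

lemma Jf_mono:
  assumes "0 \<le> b" "b \<le> b'"
  shows "Jf b y \<le> Jf b' y"
proof -
  have d: "0 \<le> b * norm y + b\<^sup>2" using assms by simp
  have "b * norm y + b\<^sup>2 \<le> b' * norm y + b'\<^sup>2"
    using assms by (intro add_mono mult_right_mono power_mono) auto
  then have m: "exp (b * norm y + b\<^sup>2) \<le> exp (b' * norm y + b'\<^sup>2)" by simp
  have "1 \<le> exp (b * norm y + b\<^sup>2)" using d by simp
  then have "(exp (b * norm y + b\<^sup>2) - 1)\<^sup>2 \<le> (exp (b' * norm y + b'\<^sup>2) - 1)\<^sup>2"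
    using m by (intro power_mono) auto
  then show ?thesis unfolding Jf_def
    using m by (intro mult_mono) auto
qed

lemma Jf_nonneg: "0 \<le> Jf b y"
  by (simp add: Jf_def)

lemma Jf_bound:
  assumes "0 \<le> b" "b \<le> 1"
  shows "Jf b y \<le> exp 3 * exp (3 * norm y)"
proof -
  have d: "0 \<le> b * norm y + b\<^sup>2" using assms by simp
  have d2: "b * norm y + b\<^sup>2 \<le> norm y + 1"
    using assms by (intro add_mono) (auto simp: mult_left_le_one_le power_le_one)
  have "Jf b y \<le> exp (b * norm y + b\<^sup>2) * (exp (b * norm y + b\<^sup>2))\<^sup>2"
    unfolding Jf_def using d by (intro mult_left_mono power_mono) auto
  also have "\<dots> = exp (3 * (b * norm y + b\<^sup>2))"
    by (simp add: power2_eq_square exp_add[symmetric])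
  also have "\<dots> \<le> exp (3 * (norm y + 1))" using d2 by simp
  also have "\<dots> = exp 3 * exp (3 * norm y)" by (simp add: exp_add[symmetric] algebra_simps)
  finally show ?thesis .
qed

lemma Jf_measurable[measurable]: "Jf b \<in> borel_measurable borel"
  unfolding Jf_def by simp

lemma Jf_integrable:
  assumes "prob_space (std_gauss :: (real^'n) measure)" "0 \<le> b" "b \<le> 1"
  shows "integrable (std_gauss :: (real^'n) measure) (Jf b)"
proof (rule Bochner_Integration.integrable_bound)
  show "integrable (std_gauss :: (real^'n) measure) (\<lambda>y. exp 3 * exp (3 * norm y))"
    using gauss_exp_norm[OF assms(1), of 3] by simp
  show "AE y in std_gauss. norm (Jf b y) \<le> norm (exp 3 * exp (3 * norm (y :: real^'n)))"
    using Jf_bound[OF assms(2,3)] by (intro AE_I2) (simp add: abs_of_nonneg Jf_nonneg)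
qed simp

lemma Jf_small:
  assumes "prob_space (std_gauss :: (real^'n) measure)" "0 < e"
  shows "\<exists>b0>0. b0 \<le> 1 \<and> (\<forall>b. 0 \<le> b \<and> b \<le> b0 \<longrightarrow> (\<integral>y. Jf b y \<partial>(std_gauss :: (real^'n) measure)) \<le> e)"
proof -
  let ?g = "std_gauss :: (real^'n) measure"
  define bs where "bs k = 1 / (real k + 1)" for k :: nat
  have bs: "0 < bs k" "bs k \<le> 1" for k unfolding bs_def by (auto simp: field_simps)
  have lim: "(\<lambda>k. \<integral>y. Jf (bs k) y \<partial>?g) \<longlonglongrightarrow> (\<integral>y. (\<lambda>_. 0) y \<partial>?g)"
  proof (rule integral_dominated_convergence[where w="\<lambda>y. exp 3 * exp (3 * norm y)"])
    show "integrable ?g (\<lambda>y. exp 3 * exp (3 * norm y))"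
      using gauss_exp_norm[OF assms(1), of 3] by simp
    show "AE y in ?g. norm (Jf (bs k) y) \<le> exp 3 * exp (3 * norm y)" for k
      using Jf_bound[OF less_imp_le[OF bs(1)] bs(2)] by (intro AE_I2) (simp add: abs_of_nonneg Jf_nonneg)
    have bs0: "bs \<longlonglongrightarrow> 0"
      unfolding bs_def using LIMSEQ_inverse_real_of_nat by (simp add: inverse_eq_divide add.commute)
    show "AE y in ?g. (\<lambda>k. Jf (bs k) y) \<longlonglongrightarrow> 0" 
    proof (intro AE_I2)
      fix y :: "real^'n"
      have "(\<lambda>k. Jf (bs k) y) \<longlonglongrightarrow> Jf 0 y"
        unfolding Jf_def by (intro tendsto_intros bs0)
      then show "(\<lambda>k. Jf (bs k) y) \<longlonglongrightarrow> 0" by (simp add: Jf_def)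
    qed
  qed auto
  then have "(\<lambda>k. \<integral>y. Jf (bs k) y \<partial>?g) \<longlonglongrightarrow> 0" by simp
  then obtain k where k: "(\<integral>y. Jf (bs k) y \<partial>?g) < e"
  proof -
    have "eventually (\<lambda>k. (\<integral>y. Jf (bs k) y \<partial>?g) < e) sequentially"
      using order_tendstoD(2)[OF \<open>(\<lambda>k. \<integral>y. Jf (bs k) y \<partial>?g) \<longlonglongrightarrow> 0\<close> assms(2)] .
    then show ?thesis using that by (auto simp: eventually_sequentially)
  qed
  show ?thesis
  proof (intro exI[of _ "bs k"] conjI allI impI bs)
    fix b assume b: "0 \<le> b \<and> b \<le> bs k"
    have "(\<integral>y. Jf b y \<partial>?g) \<le> (\<integral>y. Jf (bs k) y \<partial>?g)"
      using b bs[of k] by (intro integral_mono Jf_integrable[OF assms(1)] Jf_mono) auto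
    then show "(\<integral>y. Jf b y \<partial>?g) \<le> e" using k by simp
  qed
qed

lemma DD_ennreal:
  fixes T :: "'a \<Rightarrow> 'b" and u :: "'a \<Rightarrow> ennreal"
  assumes T: "T \<in> S \<rightarrow> space N"
  assumes u: "u \<in> borel_measurable (vimage_algebra S T N)"
  shows "\<exists>g\<in>borel_measurable N. \<forall>x\<in>S. u x = g (T x)"
  using u
proof (induction rule: borel_measurable_induct)
  case (cong f h)
  from cong(4) obtain g where "g \<in> borel_measurable N" "\<forall>x\<in>S. h x = g (T x)" by blast
  then show ?case using cong(3) by (intro bexI[of _ g]) auto
next
  case (set A)
  then obtain B where B: "B \<in> sets N" "A = T -` B \<inter> S"
    using sets_vimage_algebra2[OF T] by blast
  show ?case
    unfolding B(2) by (intro bexI[of _ "indicator B"] ballI borel_measurable_indicator B(1)) (auto split: split_indicator)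
next
  case (mult u c)
  from mult(4) obtain g where "g \<in> borel_measurable N" "\<forall>x\<in>S. u x = g (T x)" by blast
  then show ?case by (intro bexI[of _ "\<lambda>y. c * g y"]) auto
next
  case (add u v)
  from add obtain g where "g \<in> borel_measurable N" "\<forall>x\<in>S. u x = g (T x)" by blast
  moreover from add obtain h where "h \<in> borel_measurable N" "\<forall>x\<in>S. v x = h (T x)" by blast
  ultimately show ?case by (intro bexI[of _ "\<lambda>y. h y + g y"]) auto
next
  case (seq U)
  from seq have "\<forall>i. \<exists>g. g \<in> borel_measurable N \<and> (\<forall>x\<in>S. U i x = g (T x))" by blast
  then have "\<exists>g. \<forall>i. g i \<in> borel_measurable N \<and> (\<forall>x\<in>S. U i x = g i (T x))" by (rule choice)
  then obtain g where g: "\<And>i. g i \<in> borel_measurable N" "\<And>i x. x \<in> S \<Longrightarrow> U i x = g i (T x)"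
    by blast
  show ?case
  proof (intro bexI[of _ "\<lambda>y. SUP i. g i y"] ballI)
    fix x assume "x \<in> S"
    then show "(SUP i. U i) x = (SUP i. g i (T x))" by (simp add: g(2) image_comp)
  qed (intro borel_measurable_SUP g(1) countableI_type)
qed

lemma DD_real:
  fixes T :: "'a \<Rightarrow> 'b" and u :: "'a \<Rightarrow> real"
  assumes T: "T \<in> S \<rightarrow> space N"
  assumes u: "u \<in> borel_measurable (vimage_algebra S T N)"
  shows "\<exists>g\<in>borel_measurable N. \<forall>x\<in>S. u x = g (T x)"
proof -
  have "(\<lambda>x. ennreal (u x)) \<in> borel_measurable (vimage_algebra S T N)" using u by simp
  from DD_ennreal[OF T this] obtain g1 where g1: "g1 \<in> borel_measurable N" "\<forall>x\<in>S. ennreal (u x) = g1 (T x)" by blast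
  have "(\<lambda>x. ennreal (- u x)) \<in> borel_measurable (vimage_algebra S T N)" using u by simp
  from DD_ennreal[OF T this] obtain g2 where g2: "g2 \<in> borel_measurable N" "\<forall>x\<in>S. ennreal (- u x) = g2 (T x)" by blast
  show ?thesis
  proof (intro bexI[of _ "\<lambda>y. enn2real (g1 y) - enn2real (g2 y)"] ballI)
    fix x assume x: "x \<in> S"
    have "enn2real (g1 (T x)) - enn2real (g2 (T x)) = enn2real (ennreal (u x)) - enn2real (ennreal (- u x))"
      using g1(2) g2(2) x by simp
    also have "\<dots> = u x" by (cases "u x \<ge> 0") (auto simp: ennreal_neg)
    finally show "u x = enn2real (g1 (T x)) - enn2real (g2 (T x))" by simp
  qed (use g1 g2 in simp)
qed

definition dlt :: "real \<Rightarrow> real^'n \<Rightarrow> real" where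
  "dlt b y = b * norm y + b\<^sup>2"

lemma dlt_measurable[measurable]: "dlt b \<in> borel_measurable borel"
  unfolding dlt_def by simp

lemma Jf_dlt: "Jf b y = exp (dlt b y) * (exp (dlt b y) - 1)\<^sup>2"
  by (simp add: Jf_def dlt_def)

lemma Ev_bounds:
  fixes x y :: "real^'n"
  assumes "norm x \<le> R" "0 \<le> a" "0 < s"
  defines "v \<equiv> (a / s) *\<^sub>R x"
  shows "\<bar>y \<bullet> v - (norm v)\<^sup>2 / 2\<bar> \<le> dlt (a * R / s) y"
proof -
  have R: "0 \<le> R" using assms(1) norm_ge_zero order_trans by blast
  have nv: "norm v \<le> a * R / s"
  proof -
    have "a * norm x \<le> a * R" using assms by (intro mult_left_mono) auto
    then show ?thesis unfolding v_def using assms by (simp add: field_simps)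
  qed
  have "\<bar>y \<bullet> v\<bar> \<le> norm y * norm v" by (rule Cauchy_Schwarz_ineq2)
  also have "\<dots> \<le> norm y * (a * R / s)" by (intro mult_left_mono nv) auto
  finally have 1: "\<bar>y \<bullet> v\<bar> \<le> (a * R / s) * norm y" by (simp add: mult.commute)
  have "(norm v)\<^sup>2 \<le> (a * R / s)\<^sup>2" by (intro power_mono nv) auto
  moreover have "0 \<le> (a * R / s)\<^sup>2" by simp
  ultimately have 2: "(norm v)\<^sup>2 / 2 \<le> (a * R / s)\<^sup>2" by linarith
  have 3: "0 \<le> (norm v)\<^sup>2 / 2" by simp
  show ?thesis unfolding dlt_def using 1 2 3 by arith
qed

lemma exp_abs_bound:
  fixes w d :: real
  assumes "\<bar>w\<bar> \<le> d"
  shows "exp (- d) \<le> exp w" "exp w \<le> exp d" "\<bar>exp w - 1\<bar> \<le> exp d - 1"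
proof -
  show "exp (- d) \<le> exp w" "exp w \<le> exp d" using assms by auto
  show "\<bar>exp w - 1\<bar> \<le> exp d - 1"
  proof (cases "w \<ge> 0")
    case True then show ?thesis using assms by auto
  next
    case False
    then have "\<bar>exp w - 1\<bar> = 1 - exp w" by auto
    also have "\<dots> \<le> exp (- w) - 1"
    proof -
      have "exp w * exp (- w) = 1" by (simp add: exp_minus)
      moreover have "0 < exp w" by simp
      ultimately have "exp (- w) = 1 / exp w" by (simp add: field_simps)
      moreover have "exp w + 1 / exp w \<ge> 2"
      proof -
        have "(exp w - 1)\<^sup>2 \<ge> 0" by simp
        then have "exp w * exp w + 1 \<ge> 2 * exp w" by (simp add: power2_eq_square algebra_simps)
        then show ?thesis using \<open>0 < exp w\<close> by (simp add: field_simps)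
      qed
      ultimately show ?thesis by simp
    qed
    also have "\<dots> \<le> exp d - 1" using assms False by auto
    finally show ?thesis .
  qed
qed

lemma amgm_c: "0 < c \<Longrightarrow> u * w \<le> (c * u\<^sup>2 + w\<^sup>2 / c) / 2" for u w c :: real
proof -
  assume c: "0 < c"
  have "0 \<le> (c * u - w)\<^sup>2 / c" using c by simp
  then show ?thesis using c by (simp add: power2_eq_square field_simps)
qed

lemma exp3dlt_integrable:
  assumes "prob_space (std_gauss :: (real^'n) measure)" "0 \<le> b" "b \<le> 1"
  shows "integrable (std_gauss :: (real^'n) measure) (\<lambda>y. exp (3 * dlt b y))"
proof (rule Bochner_Integration.integrable_bound)
  show "integrable (std_gauss :: (real^'n) measure) (\<lambda>y. exp 3 * exp (3 * norm y))"
    using gauss_exp_norm[OF assms(1), of 3] by simp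
  show "AE y in std_gauss. norm (exp (3 * dlt b y)) \<le> norm (exp 3 * exp (3 * norm (y :: real^'n)))"
  proof (intro AE_I2)
    fix y :: "real^'n"
    have "dlt b y \<le> norm y + 1"
      unfolding dlt_def using assms by (intro add_mono) (auto simp: mult_left_le_one_le power_le_one)
    then have "exp (3 * dlt b y) \<le> exp (3 + 3 * norm y)" by simp
    then show "norm (exp (3 * dlt b y)) \<le> norm (exp 3 * exp (3 * norm y))" by (simp add: exp_add)
  qed
qed simp

lemma sq_exp_half: "(u * exp (e / 2))\<^sup>2 = exp e * u\<^sup>2" for u e :: real
proof -
  have h: "exp (e / 2) * exp (e / 2) = exp e" by (simp add: exp_add[symmetric])
  have "(u * exp (e / 2))\<^sup>2 = u\<^sup>2 * (exp (e / 2) * exp (e / 2))" by (simp add: power2_eq_square algebra_simps)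
  then show ?thesis by (simp add: h mult.commute)
qed

lemma pointwise_shift:
  fixes g :: "real^'n \<Rightarrow> real"
  assumes gp: "prob_space (std_gauss :: (real^'n) measure)"
    and g[measurable]: "g \<in> borel_measurable borel"
    and a: "0 \<le> a" and s: "0 < s" and R: "0 \<le> R" and b1: "a * R / s \<le> 1"
    and x: "norm x \<le> R" and c: "0 < c"
    and Qint: "integrable (std_gauss :: (real^'n) measure) (\<lambda>y. exp (- dlt (a * R / s) y) * (g (s *\<^sub>R y))\<^sup>2)"
  shows "\<bar>(\<integral>y. g (a *\<^sub>R x + s *\<^sub>R y) \<partial>std_gauss) - (\<integral>y. g (s *\<^sub>R y) \<partial>std_gauss)\<bar>
     \<le> (c * (\<integral>y. exp (- dlt (a * R / s) y) * (g (s *\<^sub>R y))\<^sup>2 \<partial>std_gauss) + (\<integral>y. Jf (a * R / s) y \<partial>(std_gauss :: (real^'n) measure)) / c) / 2"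
proof -
  let ?g = "std_gauss :: (real^'n) measure"
  define b where "b = a * R / s"
  have b0: "0 \<le> b" unfolding b_def using a s R by simp
  have b1': "b \<le> 1" unfolding b_def using b1 .
  define G where "G y = g (s *\<^sub>R y)" for y :: "real^'n"
  have G[measurable]: "G \<in> borel_measurable borel" unfolding G_def by simp
  define v where "v = (a / s) *\<^sub>R x"
  have vb: "\<bar>y \<bullet> v - (norm v)\<^sup>2 / 2\<bar> \<le> dlt b y" for y
    unfolding v_def b_def by (rule Ev_bounds[OF x a s])
  define Q where "Q y = exp (- dlt b y) * (G y)\<^sup>2" for y
  have Qint': "integrable ?g Q" using Qint unfolding Q_def G_def b_def .
  have E3: "integrable ?g (\<lambda>y. exp (3 * dlt b y))" by (rule exp3dlt_integrable[OF gp b0 b1'])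
  have Jint: "integrable ?g (Jf b)" by (rule Jf_integrable[OF gp b0 b1'])
  have bnd1: "\<bar>G y\<bar> * exp (dlt b y) \<le> (Q y + exp (3 * dlt b y)) / 2" for y
  proof -
    have e1: "(\<bar>G y\<bar> * exp (- dlt b y / 2)) * exp (3 * dlt b y / 2) = \<bar>G y\<bar> * exp (dlt b y)"
      by (simp add: mult.assoc exp_add[symmetric])
    have e2: "(\<bar>G y\<bar> * exp (- dlt b y / 2))\<^sup>2 = Q y"
      unfolding Q_def sq_exp_half by simp
    have e3: "(exp (3 * dlt b y / 2))\<^sup>2 = exp (3 * dlt b y)"
      using sq_exp_half[of 1 "3 * dlt b y"] by simp
    have "(\<bar>G y\<bar> * exp (- dlt b y / 2)) * exp (3 * dlt b y / 2) \<le> (1 * (\<bar>G y\<bar> * exp (- dlt b y / 2))\<^sup>2 + (exp (3 * dlt b y / 2))\<^sup>2 / 1) / 2"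
      by (rule amgm_c) simp
    then show ?thesis unfolding e1 e2 e3 by simp
  qed
  have intGe: "integrable ?g (\<lambda>y. \<bar>G y\<bar> * exp (dlt b y))"
  proof (rule Bochner_Integration.integrable_bound)
    show "integrable ?g (\<lambda>y. (Q y + exp (3 * dlt b y)) / 2)"
      using Qint' E3 by simp
    show "AE y in ?g. norm (\<bar>G y\<bar> * exp (dlt b y)) \<le> norm ((Q y + exp (3 * dlt b y)) / 2)"
    proof (intro AE_I2)
      fix y :: "real^'n"
      have "0 \<le> Q y" by (simp add: Q_def)
      then show "norm (\<bar>G y\<bar> * exp (dlt b y)) \<le> norm ((Q y + exp (3 * dlt b y)) / 2)"
        using bnd1[of y] by simp
    qed
  qed (simp add: Q_def)
  have intEG: "integrable ?g (\<lambda>y. Ev v y * G y)"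
  proof (rule Bochner_Integration.integrable_bound[OF intGe])
    show "AE y in ?g. norm (Ev v y * G y) \<le> norm (\<bar>G y\<bar> * exp (dlt b y))"
    proof (intro AE_I2)
      fix y :: "real^'n"
      have "Ev v y \<le> exp (dlt b y)" using exp_abs_bound(2)[OF vb[of y]] .
      then show "norm (Ev v y * G y) \<le> norm (\<bar>G y\<bar> * exp (dlt b y))"
        by (simp add: abs_mult mult.commute mult_left_mono)
    qed
  qed simp
  have intG: "integrable ?g G"
  proof (rule Bochner_Integration.integrable_bound[OF intGe])
    show "AE y in ?g. norm (G y) \<le> norm (\<bar>G y\<bar> * exp (dlt b y))"
    proof (intro AE_I2)
      fix y :: "real^'n"
      have "1 \<le> exp (dlt b y)" using b0 by (simp add: dlt_def)
      then show "norm (G y) \<le> norm (\<bar>G y\<bar> * exp (dlt b y))"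
        by (simp add: abs_mult mult_le_cancel_left1)
    qed
  qed simp
  have I: "(\<integral>y. g (a *\<^sub>R x + s *\<^sub>R y) \<partial>?g) = (\<integral>y. Ev v y * G y \<partial>?g)"
  proof -
    have "(\<integral>y. g (a *\<^sub>R x + s *\<^sub>R y) \<partial>?g) = (\<integral>y. G (y + v) \<partial>?g)"
      using s by (intro Bochner_Integration.integral_cong) (auto simp: G_def v_def algebra_simps)
    also have "\<dots> = (\<integral>y. Ev v y * G y \<partial>?g)" by (rule gauss_shift_int(1)[OF G])
    finally show ?thesis .
  qed
  have "(\<integral>y. g (a *\<^sub>R x + s *\<^sub>R y) \<partial>?g) - (\<integral>y. g (s *\<^sub>R y) \<partial>?g) = (\<integral>y. Ev v y * G y - G y \<partial>?g)"
  proof -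
    have I0: "(\<integral>y. g (s *\<^sub>R y) \<partial>?g) = (\<integral>y. G y \<partial>?g)" by (simp add: G_def)
    show ?thesis unfolding I I0 using intEG intG by simp
  qed
  also have "\<bar>\<dots>\<bar> \<le> (\<integral>y. \<bar>Ev v y * G y - G y\<bar> \<partial>?g)"
    by (rule integral_abs_bound)
  also have "\<dots> \<le> (\<integral>y. (c * Q y + Jf b y / c) / 2 \<partial>?g)"
  proof (rule integral_mono)
    show "integrable ?g (\<lambda>y. \<bar>Ev v y * G y - G y\<bar>)" using intEG intG by simp
    show "integrable ?g (\<lambda>y. (c * Q y + Jf b y / c) / 2)" using Qint' Jint by simp
    fix y :: "real^'n"
    have "Ev v y * G y - G y = G y * (Ev v y - 1)" by (simp add: algebra_simps)
    then have "\<bar>Ev v y * G y - G y\<bar> = \<bar>G y\<bar> * \<bar>Ev v y - 1\<bar>" by (simp only: abs_mult)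
    also have "\<dots> \<le> \<bar>G y\<bar> * (exp (dlt b y) - 1)"
      by (intro mult_left_mono exp_abs_bound(3)[OF vb[of y]]) simp
    also have "\<dots> = (\<bar>G y\<bar> * exp (- dlt b y / 2)) * ((exp (dlt b y) - 1) * exp (dlt b y / 2))"
      by (simp add: algebra_simps exp_add[symmetric])
    also have "\<dots> \<le> (c * (\<bar>G y\<bar> * exp (- dlt b y / 2))\<^sup>2 + ((exp (dlt b y) - 1) * exp (dlt b y / 2))\<^sup>2 / c) / 2"
      by (rule amgm_c[OF c])
    also have "(\<bar>G y\<bar> * exp (- dlt b y / 2))\<^sup>2 = Q y"
      unfolding Q_def sq_exp_half by simp
    also have "((exp (dlt b y) - 1) * exp (dlt b y / 2))\<^sup>2 = Jf b y"
      unfolding Jf_dlt sq_exp_half by simp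
    finally show "\<bar>Ev v y * G y - G y\<bar> \<le> (c * Q y + Jf b y / c) / 2" .
  qed
  also have "\<dots> = (c * (\<integral>y. Q y \<partial>?g) + (\<integral>y. Jf b y \<partial>?g) / c) / 2"
    using Qint' Jint by simp
  finally show ?thesis unfolding Q_def G_def b_def .
qed

lemma abs_le_1_sq: "\<bar>u\<bar> \<le> 1 + u\<^sup>2" for u :: real
proof -
  have "0 \<le> (\<bar>u\<bar> - 1)\<^sup>2" by simp
  then have "2 * \<bar>u\<bar> \<le> \<bar>u\<bar>\<^sup>2 + 1" by (simp add: power2_eq_square algebra_simps)
  then show ?thesis by simp
qed

lemma core:
  fixes M :: "'a measure" and X N :: "'a \<Rightarrow> real^'n" and \<psi> g :: "real^'n \<Rightarrow> real"
  assumes M: "prob_space M"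
    and X_rv[measurable]: "X \<in> borel_measurable M" and N_rv[measurable]: "N \<in> borel_measurable M"
    and N_law: "distr M borel N = std_gauss"
    and indep: "prob_space.indep_var M borel X borel N"
    and a: "0 \<le> a" and s: "0 < s" and R: "0 \<le> R" and b1: "a * R / s \<le> 1"
    and psi[measurable]: "\<psi> \<in> borel_measurable borel" and psiK: "\<And>x. \<bar>\<psi> x\<bar> \<le> K"
    and psi0: "\<And>x. R < norm x \<Longrightarrow> \<psi> x = 0"
    and psimean: "(\<integral>\<omega>. \<psi> (X \<omega>) \<partial>M) = 0"
    and g[measurable]: "g \<in> borel_measurable borel"
    and g2: "integrable M (\<lambda>\<omega>. (g (a *\<^sub>R X \<omega> + s *\<^sub>R N \<omega>))\<^sup>2)"
    and p: "0 < measure M {\<omega>\<in>space M. norm (X \<omega>) \<le> R}"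
    and c: "0 < c"
  shows "\<bar>\<integral>\<omega>. \<psi> (X \<omega>) * g (a *\<^sub>R X \<omega> + s *\<^sub>R N \<omega>) \<partial>M\<bar>
    \<le> K * (c * ((\<integral>\<omega>. (g (a *\<^sub>R X \<omega> + s *\<^sub>R N \<omega>))\<^sup>2 \<partial>M) / measure M {\<omega>\<in>space M. norm (X \<omega>) \<le> R})
           + (\<integral>y. Jf (a * R / s) y \<partial>(std_gauss :: (real^'n) measure)) / c) / 2"
proof -
  interpret M: prob_space M by (rule M)
  let ?\<mu> = "distr M borel X"
  let ?\<gamma> = "std_gauss :: (real^'n) measure"
  define p where "p = measure M {\<omega>\<in>space M. norm (X \<omega>) \<le> R}"
  have p0: "0 < p" using p by (simp add: p_def)
  define b where "b = a * R / s"
  have b0: "0 \<le> b" unfolding b_def using a s R by simp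
  have b1': "b \<le> 1" using b1 by (simp add: b_def)
  have gp: "prob_space ?\<gamma>" using M.prob_space_distr[OF N_rv] N_law by simp
  have mp: "prob_space ?\<mu>" using M.prob_space_distr[OF X_rv] by simp
  interpret PP: pair_prob_space ?\<mu> ?\<gamma>
    using mp gp by (simp add: pair_prob_space_def pair_sigma_finite_def prob_space_imp_sigma_finite)
  have joint: "distr M (borel \<Otimes>\<^sub>M borel) (\<lambda>\<omega>. (X \<omega>, N \<omega>)) = ?\<mu> \<Otimes>\<^sub>M ?\<gamma>"
  proof -
    have "distr M borel X \<Otimes>\<^sub>M distr M borel N = distr M (borel \<Otimes>\<^sub>M borel) (\<lambda>\<omega>. (X \<omega>, N \<omega>))"
      using M.indep_var_distribution_eq indep by blast
    then show ?thesis by (simp add: N_law)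
  qed
  define T where "T \<omega> = a *\<^sub>R X \<omega> + s *\<^sub>R N \<omega>" for \<omega>
  have T[measurable]: "T \<in> borel_measurable M" unfolding T_def by simp
  define E2 where "E2 = (\<integral>\<omega>. (g (T \<omega>))\<^sup>2 \<partial>M)"
  define Q where "Q y = exp (- dlt b y) * (g (s *\<^sub>R y))\<^sup>2" for y :: "real^'n"
  have Q[measurable]: "Q \<in> borel_measurable borel" unfolding Q_def by simp
  have g2': "integrable M (\<lambda>\<omega>. (g (T \<omega>))\<^sup>2)" using g2 by (simp add: T_def)

  have nn1: "(\<integral>\<^sup>+\<omega>. ennreal ((g (T \<omega>))\<^sup>2) \<partial>M) = (\<integral>\<^sup>+x. \<integral>\<^sup>+y. ennreal ((g (a *\<^sub>R x + s *\<^sub>R y))\<^sup>2) \<partial>?\<gamma> \<partial>?\<mu>)"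
  proof -
    have "(\<integral>\<^sup>+\<omega>. ennreal ((g (T \<omega>))\<^sup>2) \<partial>M) = (\<integral>\<^sup>+z. ennreal ((g (a *\<^sub>R fst z + s *\<^sub>R snd z))\<^sup>2) \<partial>distr M (borel \<Otimes>\<^sub>M borel) (\<lambda>\<omega>. (X \<omega>, N \<omega>)))"
      by (subst nn_integral_distr) (auto simp: T_def)
    also have "\<dots> = (\<integral>\<^sup>+z. ennreal ((g (a *\<^sub>R fst z + s *\<^sub>R snd z))\<^sup>2) \<partial>(?\<mu> \<Otimes>\<^sub>M ?\<gamma>))"
      by (simp add: joint)
    also have "\<dots> = (\<integral>\<^sup>+x. \<integral>\<^sup>+y. ennreal ((g (a *\<^sub>R x + s *\<^sub>R y))\<^sup>2) \<partial>?\<gamma> \<partial>?\<mu>)"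
      by (subst PP.M2.nn_integral_fst[symmetric]) auto
    finally show ?thesis .
  qed
  have inner_lb: "ennreal (indicator (cball 0 R) x) * (\<integral>\<^sup>+y. ennreal (Q y) \<partial>?\<gamma>) \<le> (\<integral>\<^sup>+y. ennreal ((g (a *\<^sub>R x + s *\<^sub>R y))\<^sup>2) \<partial>?\<gamma>)" for x
  proof (cases "norm x \<le> R")
    case False then show ?thesis by (simp add: indicator_def)
  next
    case True
    define v where "v = (a / s) *\<^sub>R x"
    have "(\<integral>\<^sup>+y. ennreal ((g (a *\<^sub>R x + s *\<^sub>R y))\<^sup>2) \<partial>?\<gamma>) = (\<integral>\<^sup>+y. (\<lambda>z. ennreal ((g (s *\<^sub>R z))\<^sup>2)) (y + v) \<partial>?\<gamma>)"
      using s by (intro nn_integral_cong) (auto simp: v_def algebra_simps)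
    also have "\<dots> = (\<integral>\<^sup>+y. ennreal (Ev v y) * ennreal ((g (s *\<^sub>R y))\<^sup>2) \<partial>?\<gamma>)"
      by (rule gauss_shift_nn) simp
    also have "\<dots> \<ge> (\<integral>\<^sup>+y. ennreal (Q y) \<partial>?\<gamma>)"
    proof (intro nn_integral_mono)
      fix y :: "real^'n"
      have "exp (- dlt b y) \<le> Ev v y"
        using exp_abs_bound(1)[OF Ev_bounds[OF True a s, of y]] by (simp add: v_def b_def)
      then have "Q y \<le> Ev v y * (g (s *\<^sub>R y))\<^sup>2" unfolding Q_def by (intro mult_right_mono) auto
      then show "ennreal (Q y) \<le> ennreal (Ev v y) * ennreal ((g (s *\<^sub>R y))\<^sup>2)"
        by (simp add: ennreal_mult[symmetric])
    qed
    finally show ?thesis using True by (simp add: indicator_def)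
  qed
  have muB: "emeasure ?\<mu> (cball 0 R) = ennreal p"
  proof -
    have "X -` cball 0 R \<inter> space M = {\<omega>\<in>space M. norm (X \<omega>) \<le> R}" by auto
    then show ?thesis
      by (subst emeasure_distr) (auto simp: p_def M.emeasure_eq_measure)
  qed
  have "ennreal p * (\<integral>\<^sup>+y. ennreal (Q y) \<partial>?\<gamma>) = (\<integral>\<^sup>+x. ennreal (indicator (cball 0 R) x) * (\<integral>\<^sup>+y. ennreal (Q y) \<partial>?\<gamma>) \<partial>?\<mu>)"
  proof -
    have cb: "cball (0::real^'n) R \<in> sets borel" by simp
    show ?thesis
      by (subst nn_integral_multc) (auto simp: muB[symmetric] ennreal_indicator cb intro: borel_measurable_indicator)
  qed
  also have "\<dots> \<le> (\<integral>\<^sup>+x. \<integral>\<^sup>+y. ennreal ((g (a *\<^sub>R x + s *\<^sub>R y))\<^sup>2) \<partial>?\<gamma> \<partial>?\<mu>)"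
    by (intro nn_integral_mono inner_lb)
  also have "\<dots> = (\<integral>\<^sup>+\<omega>. ennreal ((g (T \<omega>))\<^sup>2) \<partial>M)" by (rule nn1[symmetric])
  also have "\<dots> = ennreal E2" unfolding E2_def by (rule nn_integral_eq_integral[OF g2']) simp
  finally have pQ: "ennreal p * (\<integral>\<^sup>+y. ennreal (Q y) \<partial>?\<gamma>) \<le> ennreal E2" .
  have E20: "0 \<le> E2" unfolding E2_def by simp
  have Qnn: "(\<integral>\<^sup>+y. ennreal (Q y) \<partial>?\<gamma>) \<le> ennreal (E2 / p)"
  proof -
    have "(\<integral>\<^sup>+y. ennreal (Q y) \<partial>?\<gamma>) = ennreal (1/p) * (ennreal p * (\<integral>\<^sup>+y. ennreal (Q y) \<partial>?\<gamma>))"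
      using p0 by (simp add: mult.assoc[symmetric] ennreal_mult[symmetric])
    also have "\<dots> \<le> ennreal (1/p) * ennreal E2" by (intro mult_left_mono pQ) simp
    also have "\<dots> = ennreal (E2 / p)" using p0 E20 by (simp add: ennreal_mult[symmetric])
    finally show ?thesis .
  qed
  have Qint: "integrable ?\<gamma> Q"
    using Qnn by (intro integrableI_nonneg) (auto simp: Q_def top_unique less_top[symmetric] intro: le_less_trans)
  have Qle: "(\<integral>y. Q y \<partial>?\<gamma>) \<le> E2 / p"
  proof -
    have "ennreal (\<integral>y. Q y \<partial>?\<gamma>) = (\<integral>\<^sup>+y. ennreal (Q y) \<partial>?\<gamma>)"
      by (rule nn_integral_eq_integral[symmetric, OF Qint]) (simp add: Q_def)
    then have "ennreal (\<integral>y. Q y \<partial>?\<gamma>) \<le> ennreal (E2 / p)" using Qnn by simp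
    then show ?thesis using p0 E20 by (simp add: ennreal_le_iff)
  qed

  have gint: "integrable M (\<lambda>\<omega>. g (T \<omega>))"
  proof (rule Bochner_Integration.integrable_bound)
    show "integrable M (\<lambda>\<omega>. 1 + (g (T \<omega>))\<^sup>2)" using g2' by simp
    show "AE \<omega> in M. norm (g (T \<omega>)) \<le> norm (1 + (g (T \<omega>))\<^sup>2)"
    proof (intro AE_I2)
      fix \<omega>
      have "\<bar>g (T \<omega>)\<bar> \<le> 1 + (g (T \<omega>))\<^sup>2" by (rule abs_le_1_sq)
      then show "norm (g (T \<omega>)) \<le> norm (1 + (g (T \<omega>))\<^sup>2)" by simp
    qed
  qed simp
  have int1: "integrable M (\<lambda>\<omega>. \<psi> (X \<omega>) * g (T \<omega>))"
  proof (rule Bochner_Integration.integrable_bound)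
    show "integrable M (\<lambda>\<omega>. K * g (T \<omega>))" using gint by simp
    show "AE \<omega> in M. norm (\<psi> (X \<omega>) * g (T \<omega>)) \<le> norm (K * g (T \<omega>))"
    proof (intro AE_I2)
      fix \<omega>
      have "0 \<le> K" using psiK[of 0] by simp
      then show "norm (\<psi> (X \<omega>) * g (T \<omega>)) \<le> norm (K * g (T \<omega>))"
        using psiK[of "X \<omega>"] by (simp add: abs_mult mult_right_mono)
    qed
  qed simp
  define H where "H z = \<psi> (fst z) * g (a *\<^sub>R fst z + s *\<^sub>R snd z)" for z :: "(real^'n) \<times> (real^'n)"
  have H[measurable]: "H \<in> borel_measurable (borel \<Otimes>\<^sub>M borel)" unfolding H_def by simp
  have HM: "(\<lambda>\<omega>. \<psi> (X \<omega>) * g (T \<omega>)) = (\<lambda>\<omega>. H (X \<omega>, N \<omega>))"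
    by (simp add: H_def T_def)
  have Hint: "integrable (?\<mu> \<Otimes>\<^sub>M ?\<gamma>) H"
  proof -
    have "integrable (distr M (borel \<Otimes>\<^sub>M borel) (\<lambda>\<omega>. (X \<omega>, N \<omega>))) H"
      using int1 unfolding HM by (subst integrable_distr_eq) auto
    then show ?thesis by (simp add: joint)
  qed
  have eq1: "(\<integral>\<omega>. \<psi> (X \<omega>) * g (T \<omega>) \<partial>M) = (\<integral>z. H z \<partial>(?\<mu> \<Otimes>\<^sub>M ?\<gamma>))"
  proof -
    have "(\<integral>\<omega>. \<psi> (X \<omega>) * g (T \<omega>) \<partial>M) = (\<integral>z. H z \<partial>distr M (borel \<Otimes>\<^sub>M borel) (\<lambda>\<omega>. (X \<omega>, N \<omega>)))"
      unfolding HM by (subst integral_distr) auto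
    then show ?thesis by (simp add: joint)
  qed
  define I where "I x = (\<integral>y. g (a *\<^sub>R x + s *\<^sub>R y) \<partial>?\<gamma>)" for x
  define I0 where "I0 = (\<integral>y. g (s *\<^sub>R y) \<partial>?\<gamma>)"
  have HI: "(\<integral>y. H (x, y) \<partial>?\<gamma>) = \<psi> x * I x" for x
    by (simp add: H_def I_def)
  have eq2: "(\<integral>z. H z \<partial>(?\<mu> \<Otimes>\<^sub>M ?\<gamma>)) = (\<integral>x. \<psi> x * I x \<partial>?\<mu>)"
    using PP.integral_fst'[OF Hint] HI by simp
  have intI: "integrable ?\<mu> (\<lambda>x. \<psi> x * I x)"
    using PP.integrable_fst'[OF Hint] HI by simp
  have intpsi: "integrable ?\<mu> \<psi>"
  proof (rule Bochner_Integration.integrable_bound)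
    show "integrable ?\<mu> (\<lambda>_. K)" by (rule PP.M1.integrable_const)
    show "AE x in ?\<mu>. norm (\<psi> x) \<le> norm K"
    proof (intro AE_I2)
      fix x show "norm (\<psi> x) \<le> norm K" using psiK[of x] by simp
    qed
  qed simp
  have psimu: "(\<integral>x. \<psi> x \<partial>?\<mu>) = 0"
    using psimean by (subst integral_distr) auto
  have "(\<integral>x. \<psi> x * I x \<partial>?\<mu>) = (\<integral>x. \<psi> x * (I x - I0) \<partial>?\<mu>) + I0 * (\<integral>x. \<psi> x \<partial>?\<mu>)"
  proof -
    have "(\<integral>x. \<psi> x * (I x - I0) \<partial>?\<mu>) = (\<integral>x. \<psi> x * I x - \<psi> x * I0 \<partial>?\<mu>)"
      by (simp add: algebra_simps)
    also have "\<dots> = (\<integral>x. \<psi> x * I x \<partial>?\<mu>) - (\<integral>x. \<psi> x * I0 \<partial>?\<mu>)"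
      using intI intpsi by (intro Bochner_Integration.integral_diff) auto
    finally show ?thesis by simp
  qed
  then have eq3: "(\<integral>x. \<psi> x * I x \<partial>?\<mu>) = (\<integral>x. \<psi> x * (I x - I0) \<partial>?\<mu>)"
    using psimu by simp
  define D where "D = (c * (\<integral>y. Q y \<partial>?\<gamma>) + (\<integral>y. Jf b y \<partial>?\<gamma>) / c) / 2"
  have D0: "0 \<le> D"
  proof -
    have "0 \<le> (\<integral>y. Q y \<partial>?\<gamma>)" by (intro integral_nonneg_AE) (simp add: Q_def)
    moreover have "0 \<le> (\<integral>y. Jf b y \<partial>?\<gamma>)" by (intro integral_nonneg_AE) (simp add: Jf_nonneg)
    ultimately show ?thesis unfolding D_def using c by simp
  qed
  have K0: "0 \<le> K" using psiK[of 0] by simp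
  have pw: "\<bar>\<psi> x * (I x - I0)\<bar> \<le> K * D" for x
  proof (cases "norm x \<le> R")
    case False then show ?thesis using psi0[of x] K0 D0 by simp
  next
    case True
    have "\<bar>I x - I0\<bar> \<le> D"
      unfolding I_def I0_def D_def Q_def b_def
      by (rule pointwise_shift[OF gp g a s R b1 True c]) (use Qint in \<open>simp add: Q_def[abs_def] b_def\<close>)
    then show ?thesis using psiK[of x] by (simp add: abs_mult mult_mono D0)
  qed
  have "\<bar>\<integral>\<omega>. \<psi> (X \<omega>) * g (T \<omega>) \<partial>M\<bar> = \<bar>\<integral>x. \<psi> x * (I x - I0) \<partial>?\<mu>\<bar>"
    using eq1 eq2 eq3 by simp
  also have "\<dots> \<le> (\<integral>x. K * D \<partial>?\<mu>)"
  proof (rule integral_abs_bound_integral)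
    show "integrable ?\<mu> (\<lambda>x. \<psi> x * (I x - I0))"
      using intI intpsi by (simp add: right_diff_distrib)
    show "integrable ?\<mu> (\<lambda>x. K * D)" by (rule PP.M1.integrable_const)
  qed (use pw in auto)
  also have "\<dots> = K * D" using PP.M1.prob_space by simp
  also have "\<dots> \<le> K * ((c * (E2 / p) + (\<integral>y. Jf b y \<partial>?\<gamma>) / c) / 2)"
  proof -
    have "c * (\<integral>y. Q y \<partial>?\<gamma>) \<le> c * (E2 / p)" using c Qle by (intro mult_left_mono) auto
    then show ?thesis unfolding D_def using K0 c Qle by (intro mult_left_mono divide_right_mono add_right_mono) auto
  qed
  also have "\<dots> = K * (c * (E2 / p) + (\<integral>y. Jf b y \<partial>?\<gamma>) / c) / 2" by simp
  finally show ?thesis by (simp add: T_def E2_def p_def b_def)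
qed

lemma condL2:
  assumes SF: "sigma_finite_subalgebra M F" and P: "prob_space M"
    and Y[measurable]: "Y \<in> borel_measurable M" and Yi: "integrable M Y"
    and Y2: "integrable M (\<lambda>x. (Y x)\<^sup>2)"
  shows "integrable M (\<lambda>x. (real_cond_exp M F Y x)\<^sup>2)"
    and "(\<integral>x. (real_cond_exp M F Y x)\<^sup>2 \<partial>M) \<le> (\<integral>x. (Y x)\<^sup>2 \<partial>M)"
    and "(\<integral>x. (real_cond_exp M F Y x)\<^sup>2 \<partial>M) = (\<integral>x. real_cond_exp M F Y x * Y x \<partial>M)"
proof -
  interpret sigma_finite_subalgebra M F by (rule SF)
  interpret prob_space M by (rule P)
  have q: "integrable M (\<lambda>x. power2 (Y x))" using Y2 by simp
  have cv: "convex_on UNIV (power2 :: real \<Rightarrow> real)" by (rule convex_power2)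
  have qm: "(power2 :: real \<Rightarrow> real) \<in> borel_measurable borel" by simp
  have J: "AE x in M. power2 (real_cond_exp M F Y x) \<le> real_cond_exp M F (\<lambda>x. power2 (Y x)) x"
    by (rule real_cond_exp_jensens_inequality(2)[OF Yi _ _ q cv qm, of 0 0]) auto
  show int: "integrable M (\<lambda>x. (real_cond_exp M F Y x)\<^sup>2)"
    using integrable_convex_cond_exp[OF Yi _ _ q cv qm, of 0 0] by auto
  have "(\<integral>x. (real_cond_exp M F Y x)\<^sup>2 \<partial>M) \<le> (\<integral>x. real_cond_exp M F (\<lambda>x. power2 (Y x)) x \<partial>M)"
    by (rule integral_mono_AE[OF int real_cond_exp_int(1)[OF q] J])
  also have "\<dots> = (\<integral>x. (Y x)\<^sup>2 \<partial>M)" by (rule real_cond_exp_int(2)[OF q])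
  finally show "(\<integral>x. (real_cond_exp M F Y x)\<^sup>2 \<partial>M) \<le> (\<integral>x. (Y x)\<^sup>2 \<partial>M)" .
  have ZY: "integrable M (\<lambda>x. real_cond_exp M F Y x * Y x)"
  proof (rule Bochner_Integration.integrable_bound)
    show "integrable M (\<lambda>x. ((real_cond_exp M F Y x)\<^sup>2 + (Y x)\<^sup>2) / 2)" using int Y2 by simp
    show "AE x in M. norm (real_cond_exp M F Y x * Y x) \<le> norm (((real_cond_exp M F Y x)\<^sup>2 + (Y x)\<^sup>2) / 2)"
    proof (intro AE_I2)
      fix x
      have "\<bar>real_cond_exp M F Y x * Y x\<bar> \<le> ((real_cond_exp M F Y x)\<^sup>2 + (Y x)\<^sup>2) / 2"
      proof -
        have "0 \<le> (\<bar>real_cond_exp M F Y x\<bar> - \<bar>Y x\<bar>)\<^sup>2" by simp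
        then show ?thesis by (simp add: power2_eq_square algebra_simps abs_mult)
      qed
      then show "norm (real_cond_exp M F Y x * Y x) \<le> norm (((real_cond_exp M F Y x)\<^sup>2 + (Y x)\<^sup>2) / 2)"
        by simp
    qed
  qed simp
  have "(\<integral>x. real_cond_exp M F Y x * real_cond_exp M F Y x \<partial>M) = (\<integral>x. real_cond_exp M F Y x * Y x \<partial>M)"
    by (rule real_cond_exp_intg(2)[OF ZY]) auto
  then show "(\<integral>x. (real_cond_exp M F Y x)\<^sup>2 \<partial>M) = (\<integral>x. real_cond_exp M F Y x * Y x \<partial>M)"
    by (simp add: power2_eq_square)
qed

lemma sfs_vimage:
  assumes P: "prob_space M" and T[measurable]: "T \<in> borel_measurable M"
  shows "sigma_finite_subalgebra M (vimage_algebra (space M) T (borel :: ('b::topological_space) measure))"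
proof -
  interpret prob_space M by (rule P)
  have "subalgebra M (vimage_algebra (space M) T borel)"
    unfolding subalgebra_def
  proof
    show "space (vimage_algebra (space M) T borel) = space M" by simp
    have "sets (vimage_algebra (space M) T (borel :: 'b measure)) = {T -` A \<inter> space M |A. A \<in> sets borel}"
      by (rule sets_vimage_algebra2) simp
    then show "sets (vimage_algebra (space M) T borel) \<subseteq> sets M" by auto
  qed
  then have "finite_measure_subalgebra M (vimage_algebra (space M) T borel)"
    by (simp add: finite_measure_subalgebra_def finite_measure_subalgebra_axioms_def finite_measure_axioms)
  then show ?thesis by (rule finite_measure_subalgebra_is_sigma_finite)
qed

lemma integral_abs_bound_integral':
  fixes f :: "'a \<Rightarrow> real"
  assumes "integrable M f" "integrable M g" "\<And>x. x \<in> space M \<Longrightarrow> \<bar>f x\<bar> \<le> g x"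
  shows "\<bar>\<integral>x. f x \<partial>M\<bar> \<le> (\<integral>x. g x \<partial>M)"
proof -
  have "\<bar>\<integral>x. f x \<partial>M\<bar> \<le> (\<integral>x. \<bar>f x\<bar> \<partial>M)" by (rule integral_abs_bound)
  also have "\<dots> \<le> (\<integral>x. g x \<partial>M)" using assms by (intro integral_mono) auto
  finally show ?thesis .
qed

lemma fixed_bound:
  fixes M :: "'a measure" and X N :: "'a \<Rightarrow> real^'n" and \<alpha> :: "real^'n"
  assumes M: "prob_space M"
    and X_rv[measurable]: "X \<in> borel_measurable M" and N_rv[measurable]: "N \<in> borel_measurable M"
    and N_law: "distr M borel N = std_gauss"
    and indep: "prob_space.indep_var M borel X borel N"
    and Xi: "integrable M X" and X2: "integrable M (\<lambda>\<omega>. (norm (X \<omega>))\<^sup>2)"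
    and mean0: "(\<integral>\<omega>. X \<omega> \<partial>M) = 0"
    and alpha: "norm \<alpha> = 1"
    and a: "0 \<le> a" and s: "0 < s" and R: "1 \<le> R" and b1: "a * R / s \<le> 1"
    and p: "0 < measure M {\<omega>\<in>space M. norm (X \<omega>) \<le> R}"
  shows "integrable M (\<lambda>\<omega>. (real_cond_exp M (vimage_algebra (space M) (\<lambda>\<omega>. a *\<^sub>R X \<omega> + s *\<^sub>R N \<omega>) borel) (\<lambda>\<omega>. \<alpha> \<bullet> X \<omega>) \<omega>)\<^sup>2)"
    and "(\<integral>\<omega>. (real_cond_exp M (vimage_algebra (space M) (\<lambda>\<omega>. a *\<^sub>R X \<omega> + s *\<^sub>R N \<omega>) borel) (\<lambda>\<omega>. \<alpha> \<bullet> X \<omega>) \<omega>)\<^sup>2 \<partial>M)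
      \<le> 8 * R\<^sup>2 * (\<integral>y. Jf (a * R / s) y \<partial>(std_gauss :: (real^'n) measure)) / measure M {\<omega>\<in>space M. norm (X \<omega>) \<le> R}
        + 2 * (\<integral>\<omega>. (norm (X \<omega>))\<^sup>2 * indicator {x. R < norm x} (X \<omega>) \<partial>M)
        + 2 * ((\<integral>\<omega>. (norm (X \<omega>))\<^sup>2 * indicator {x. R < norm x} (X \<omega>) \<partial>M) / (R * measure M {\<omega>\<in>space M. norm (X \<omega>) \<le> R}))\<^sup>2"
proof -
  interpret M: prob_space M by (rule M)
  define T where "T \<omega> = a *\<^sub>R X \<omega> + s *\<^sub>R N \<omega>" for \<omega>
  have T[measurable]: "T \<in> borel_measurable M" unfolding T_def by simp
  define F where "F = vimage_algebra (space M) T (borel :: (real^'n) measure)"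
  have SF: "sigma_finite_subalgebra M F" unfolding F_def by (rule sfs_vimage[OF M T])
  interpret SF: sigma_finite_subalgebra M F by (rule SF)
  define p where "p = measure M {\<omega>\<in>space M. norm (X \<omega>) \<le> R}"
  have p0: "0 < p" using p by (simp add: p_def)
  define B where "B = cball (0 :: real^'n) R"
  have B[measurable]: "B \<in> sets borel" by (simp add: B_def)
  define \<tau> where "\<tau> = (\<integral>\<omega>. (norm (X \<omega>))\<^sup>2 * indicator {x. R < norm x} (X \<omega>) \<partial>M)"
  define J where "J = (\<integral>y. Jf (a * R / s) y \<partial>(std_gauss :: (real^'n) measure))"
  have pB: "p = (\<integral>\<omega>. indicator B (X \<omega>) \<partial>M)"
  proof -
    have "(\<integral>\<omega>. indicator B (X \<omega>) \<partial>M) = (\<integral>\<omega>. indicator {\<omega>\<in>space M. norm (X \<omega>) \<le> R} \<omega> \<partial>M)"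
      by (intro Bochner_Integration.integral_cong) (auto simp: B_def indicator_def)
    also have "\<dots> = p" unfolding p_def by (simp add: Bochner_Integration.integral_indicator Int_absorb2 Collect_conj_eq[symmetric])
    finally show ?thesis by simp
  qed
  have ax: "\<bar>\<alpha> \<bullet> x\<bar> \<le> norm x" for x :: "real^'n"
    using Cauchy_Schwarz_ineq2[of \<alpha> x] alpha by simp
  have ax2: "(\<alpha> \<bullet> x)\<^sup>2 \<le> (norm x)\<^sup>2" for x :: "real^'n"
    using power_mono[OF ax[of x] abs_ge_zero, of 2] by simp
  have Yi: "integrable M (\<lambda>\<omega>. \<alpha> \<bullet> X \<omega>)" using Xi by simp
  have EY: "(\<integral>\<omega>. \<alpha> \<bullet> X \<omega> \<partial>M) = 0" using Xi mean0 by simp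
  have Y2: "integrable M (\<lambda>\<omega>. (\<alpha> \<bullet> X \<omega>)\<^sup>2)"
  proof (rule Bochner_Integration.integrable_bound[OF X2])
    show "AE \<omega> in M. norm ((\<alpha> \<bullet> X \<omega>)\<^sup>2) \<le> norm ((norm (X \<omega>))\<^sup>2)"
      using ax2 by (intro AE_I2) simp
  qed simp
  define E1 where "E1 = (\<integral>\<omega>. (\<alpha> \<bullet> X \<omega>) * indicator B (X \<omega>) \<partial>M)"
  define c0 where "c0 = E1 / p"
  have intYB: "integrable M (\<lambda>\<omega>. (\<alpha> \<bullet> X \<omega>) * indicator B (X \<omega>))"
  proof (rule Bochner_Integration.integrable_bound[OF Yi])
    show "AE \<omega> in M. norm ((\<alpha> \<bullet> X \<omega>) * indicator B (X \<omega>)) \<le> norm (\<alpha> \<bullet> X \<omega>)"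
      by (intro AE_I2) (simp add: indicator_def)
  qed simp
  have intB: "integrable M (\<lambda>\<omega>. indicator B (X \<omega>) :: real)"
  proof (rule Bochner_Integration.integrable_bound[OF M.integrable_const[of 1]])
    show "AE \<omega> in M. norm (indicator B (X \<omega>) :: real) \<le> norm (1::real)"
      by (intro AE_I2) (simp add: indicator_def)
  qed simp
  have E1R: "\<bar>E1\<bar> \<le> R * p"
  proof -
    have "\<bar>E1\<bar> \<le> (\<integral>\<omega>. R * indicator B (X \<omega>) \<partial>M)"
      unfolding E1_def
    proof (rule integral_abs_bound_integral')
      show "integrable M (\<lambda>\<omega>. (\<alpha> \<bullet> X \<omega>) * indicator B (X \<omega>))" by (rule intYB)
      show "integrable M (\<lambda>\<omega>. R * indicator B (X \<omega>))" using intB by simp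
      fix \<omega> show "\<bar>(\<alpha> \<bullet> X \<omega>) * indicator B (X \<omega>)\<bar> \<le> R * indicator B (X \<omega>)"
        using ax[of "X \<omega>"] by (auto simp: indicator_def B_def)
    qed
    also have "\<dots> = R * p" using pB by simp
    finally show ?thesis .
  qed
  have c0R: "\<bar>c0\<bar> \<le> R" unfolding c0_def using E1R p0 by (simp add: abs_div pos_divide_le_eq)
  define K where "K = 2 * R"
  have K0: "0 < K" using R by (simp add: K_def)
  define \<psi> where "\<psi> x = (\<alpha> \<bullet> x - c0) * indicator B x" for x :: "real^'n"
  have psi[measurable]: "\<psi> \<in> borel_measurable borel" unfolding \<psi>_def by simp
  have psiK: "\<bar>\<psi> x\<bar> \<le> K" for x
  proof (cases "x \<in> B")
    case True
    then have "norm x \<le> R" by (simp add: B_def)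
    then have "\<bar>\<alpha> \<bullet> x - c0\<bar> \<le> R + R" using ax[of x] c0R by linarith
    then show ?thesis using True by (simp add: \<psi>_def K_def)
  next
    case False then show ?thesis using K0 by (simp add: \<psi>_def)
  qed
  have psi0: "\<psi> x = 0" if "R < norm x" for x
    using that by (simp add: \<psi>_def B_def)
  have intpsi: "integrable M (\<lambda>\<omega>. \<psi> (X \<omega>))"
  proof (rule Bochner_Integration.integrable_bound[OF M.integrable_const[of K]])
    show "AE \<omega> in M. norm (\<psi> (X \<omega>)) \<le> norm K" using psiK K0 by (intro AE_I2) (simp add: abs_of_pos[OF K0])
  qed simp
  have psimean: "(\<integral>\<omega>. \<psi> (X \<omega>) \<partial>M) = 0"
  proof -
    have "(\<integral>\<omega>. \<psi> (X \<omega>) \<partial>M) = (\<integral>\<omega>. (\<alpha> \<bullet> X \<omega>) * indicator B (X \<omega>) - c0 * indicator B (X \<omega>) \<partial>M)"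
      by (simp add: \<psi>_def algebra_simps)
    also have "\<dots> = E1 - c0 * p"
      using intYB intB pB by (simp add: E1_def)
    also have "\<dots> = 0" using p0 by (simp add: c0_def)
    finally show ?thesis .
  qed
  define Y1 where "Y1 \<omega> = \<psi> (X \<omega>)" for \<omega>
  define Y2 where "Y2 \<omega> = \<alpha> \<bullet> X \<omega> - \<psi> (X \<omega>)" for \<omega>
  have Y1m[measurable]: "Y1 \<in> borel_measurable M" unfolding Y1_def by simp
  have Y2m[measurable]: "Y2 \<in> borel_measurable M" unfolding Y2_def by simp
  have Y1i: "integrable M Y1" using intpsi by (simp add: Y1_def[abs_def])
  have Y1sq: "integrable M (\<lambda>\<omega>. (Y1 \<omega>)\<^sup>2)"
  proof (rule Bochner_Integration.integrable_bound[OF M.integrable_const[of "K\<^sup>2"]])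
    show "AE \<omega> in M. norm ((Y1 \<omega>)\<^sup>2) \<le> norm (K\<^sup>2)"
    proof (intro AE_I2)
      fix \<omega>
      have "\<bar>Y1 \<omega>\<bar>\<^sup>2 \<le> K\<^sup>2" using psiK[of "X \<omega>"] by (intro power_mono) (auto simp: Y1_def)
      then show "norm ((Y1 \<omega>)\<^sup>2) \<le> norm (K\<^sup>2)" by simp
    qed
  qed simp
  have Y2i: "integrable M Y2" using Yi intpsi by (simp add: Y2_def[abs_def])
  have Y2sq: "integrable M (\<lambda>\<omega>. (Y2 \<omega>)\<^sup>2)"
  proof (rule Bochner_Integration.integrable_bound)
    show "integrable M (\<lambda>\<omega>. 2 * (\<alpha> \<bullet> X \<omega>)\<^sup>2 + 2 * (Y1 \<omega>)\<^sup>2)" using Y2 Y1sq by simp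
    show "AE \<omega> in M. norm ((Y2 \<omega>)\<^sup>2) \<le> norm (2 * (\<alpha> \<bullet> X \<omega>)\<^sup>2 + 2 * (Y1 \<omega>)\<^sup>2)"
    proof (intro AE_I2)
      fix \<omega>
      have "0 \<le> (\<alpha> \<bullet> X \<omega> + Y1 \<omega>)\<^sup>2" by simp
      then have "(Y2 \<omega>)\<^sup>2 \<le> 2 * (\<alpha> \<bullet> X \<omega>)\<^sup>2 + 2 * (Y1 \<omega>)\<^sup>2"
        by (simp add: Y2_def Y1_def power2_eq_square algebra_simps)
      then show "norm ((Y2 \<omega>)\<^sup>2) \<le> norm (2 * (\<alpha> \<bullet> X \<omega>)\<^sup>2 + 2 * (Y1 \<omega>)\<^sup>2)" by simp
    qed
  qed simp
  define Z where "Z = real_cond_exp M F (\<lambda>\<omega>. \<alpha> \<bullet> X \<omega>)"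
  define Z1 where "Z1 = real_cond_exp M F Y1"
  define Z2 where "Z2 = real_cond_exp M F Y2"
  have Ym: "(\<lambda>\<omega>. \<alpha> \<bullet> X \<omega>) \<in> borel_measurable M" by simp
  note L = condL2[OF SF M Ym Yi Y2, folded Z_def]
  note L1 = condL2[OF SF M Y1m Y1i Y1sq, folded Z1_def]
  note L2 = condL2[OF SF M Y2m Y2i Y2sq, folded Z2_def]
  have sumY: "(\<lambda>\<omega>. Y1 \<omega> + Y2 \<omega>) = (\<lambda>\<omega>. \<alpha> \<bullet> X \<omega>)" by (simp add: Y1_def Y2_def)
  have AEZ: "AE \<omega> in M. Z \<omega> = Z1 \<omega> + Z2 \<omega>"
    using SF.real_cond_exp_add[OF Y1i Y2i] unfolding sumY Z_def Z1_def Z2_def .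
  have step1: "(\<integral>\<omega>. (Z \<omega>)\<^sup>2 \<partial>M) \<le> 2 * (\<integral>\<omega>. (Z1 \<omega>)\<^sup>2 \<partial>M) + 2 * (\<integral>\<omega>. (Z2 \<omega>)\<^sup>2 \<partial>M)"
  proof -
    have "(\<integral>\<omega>. (Z \<omega>)\<^sup>2 \<partial>M) \<le> (\<integral>\<omega>. 2 * (Z1 \<omega>)\<^sup>2 + 2 * (Z2 \<omega>)\<^sup>2 \<partial>M)"
    proof (rule integral_mono_AE)
      show "integrable M (\<lambda>\<omega>. (Z \<omega>)\<^sup>2)" by (rule L(1))
      show "integrable M (\<lambda>\<omega>. 2 * (Z1 \<omega>)\<^sup>2 + 2 * (Z2 \<omega>)\<^sup>2)" using L1(1) L2(1) by simp
      show "AE \<omega> in M. (Z \<omega>)\<^sup>2 \<le> 2 * (Z1 \<omega>)\<^sup>2 + 2 * (Z2 \<omega>)\<^sup>2"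
        using AEZ
      proof eventually_elim
        case (elim \<omega>)
        have "0 \<le> (Z1 \<omega> - Z2 \<omega>)\<^sup>2" by simp
        then show ?case using elim by (simp add: power2_eq_square algebra_simps)
      qed
    qed
    also have "\<dots> = 2 * (\<integral>\<omega>. (Z1 \<omega>)\<^sup>2 \<partial>M) + 2 * (\<integral>\<omega>. (Z2 \<omega>)\<^sup>2 \<partial>M)"
      using L1(1) L2(1) by simp
    finally show ?thesis .
  qed
  have Z1F: "Z1 \<in> borel_measurable F" unfolding Z1_def by simp
  have "\<exists>g\<in>borel_measurable (borel :: (real^'n) measure). \<forall>\<omega>\<in>space M. Z1 \<omega> = g (T \<omega>)"
  proof (rule DD_real)
    show "T \<in> space M \<rightarrow> space (borel :: (real^'n) measure)" by simp
    show "Z1 \<in> borel_measurable (vimage_algebra (space M) T borel)" using Z1F by (simp only: F_def)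
  qed
  then obtain g where g[measurable]: "g \<in> borel_measurable (borel :: (real^'n) measure)"
    and gZ: "\<And>\<omega>. \<omega> \<in> space M \<Longrightarrow> Z1 \<omega> = g (T \<omega>)" by blast
  have g2: "integrable M (\<lambda>\<omega>. (g (a *\<^sub>R X \<omega> + s *\<^sub>R N \<omega>))\<^sup>2)"
  proof -
    have "integrable M (\<lambda>\<omega>. (Z1 \<omega>)\<^sup>2) = integrable M (\<lambda>\<omega>. (g (a *\<^sub>R X \<omega> + s *\<^sub>R N \<omega>))\<^sup>2)"
      by (intro Bochner_Integration.integrable_cong refl) (simp add: gZ T_def)
    then show ?thesis using L1(1) by simp
  qed
  define E where "E = (\<integral>\<omega>. (Z1 \<omega>)\<^sup>2 \<partial>M)"
  have EgT: "E = (\<integral>\<omega>. (g (a *\<^sub>R X \<omega> + s *\<^sub>R N \<omega>))\<^sup>2 \<partial>M)"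
    unfolding E_def by (intro Bochner_Integration.integral_cong refl) (simp add: gZ T_def)
  have EpsiG: "E = (\<integral>\<omega>. \<psi> (X \<omega>) * g (a *\<^sub>R X \<omega> + s *\<^sub>R N \<omega>) \<partial>M)"
    unfolding E_def L1(3) by (intro Bochner_Integration.integral_cong refl) (simp add: gZ T_def Y1_def)
  define c where "c = p / K"
  have c: "0 < c" using p0 K0 by (simp add: c_def)
  have R0: "0 \<le> R" using R by simp
  have cor: "\<bar>E\<bar> \<le> K * (c * (E / p) + J / c) / 2"
    using core[OF M X_rv N_rv N_law indep a s R0 b1 psi psiK psi0 psimean g g2 p c]
    unfolding EpsiG[symmetric] EgT[symmetric] p_def[symmetric] J_def[symmetric] .
  have "K * (c * (E / p) + J / c) / 2 = (E + K\<^sup>2 * J / p) / 2"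
    using p0 K0 by (simp add: c_def field_simps power2_eq_square)
  with cor have "E \<le> (E + K\<^sup>2 * J / p) / 2" by simp
  then have E_bound: "E \<le> 4 * R\<^sup>2 * J / p" by (simp add: K_def power2_eq_square field_simps)
  define Bc where "Bc = {x :: real^'n. R < norm x}"
  have Bc[measurable]: "Bc \<in> sets borel" unfolding Bc_def by simp
  have indBc: "indicator B x + indicator Bc x = (1::real)" for x
    by (simp add: B_def Bc_def indicator_def)
  have intXB: "integrable M (\<lambda>\<omega>. (norm (X \<omega>))\<^sup>2 * indicator Bc (X \<omega>))"
  proof (rule Bochner_Integration.integrable_bound[OF X2])
    show "AE \<omega> in M. norm ((norm (X \<omega>))\<^sup>2 * indicator Bc (X \<omega>)) \<le> norm ((norm (X \<omega>))\<^sup>2)"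
      by (intro AE_I2) (simp add: indicator_def)
  qed simp
  have tau: "\<tau> = (\<integral>\<omega>. (norm (X \<omega>))\<^sup>2 * indicator Bc (X \<omega>) \<partial>M)"
    by (simp add: \<tau>_def Bc_def)
  have intYBc: "integrable M (\<lambda>\<omega>. (\<alpha> \<bullet> X \<omega>) * indicator Bc (X \<omega>))"
  proof (rule Bochner_Integration.integrable_bound[OF Yi])
    show "AE \<omega> in M. norm ((\<alpha> \<bullet> X \<omega>) * indicator Bc (X \<omega>)) \<le> norm (\<alpha> \<bullet> X \<omega>)"
      by (intro AE_I2) (simp add: indicator_def)
  qed simp
  have E1eq: "E1 = - (\<integral>\<omega>. (\<alpha> \<bullet> X \<omega>) * indicator Bc (X \<omega>) \<partial>M)"
  proof -
    have "(\<integral>\<omega>. \<alpha> \<bullet> X \<omega> \<partial>M) = (\<integral>\<omega>. (\<alpha> \<bullet> X \<omega>) * indicator B (X \<omega>) + (\<alpha> \<bullet> X \<omega>) * indicator Bc (X \<omega>) \<partial>M)"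
      by (intro Bochner_Integration.integral_cong refl) (simp add: distrib_left[symmetric] indBc)
    also have "\<dots> = E1 + (\<integral>\<omega>. (\<alpha> \<bullet> X \<omega>) * indicator Bc (X \<omega>) \<partial>M)"
      unfolding E1_def using intYB intYBc by simp
    finally show ?thesis using EY by simp
  qed
  have E1tau: "\<bar>E1\<bar> \<le> \<tau> / R"
  proof -
    have "\<bar>E1\<bar> \<le> (\<integral>\<omega>. (norm (X \<omega>))\<^sup>2 * indicator Bc (X \<omega>) / R \<partial>M)"
      unfolding E1eq abs_minus_cancel
    proof (rule integral_abs_bound_integral')
      show "integrable M (\<lambda>\<omega>. (\<alpha> \<bullet> X \<omega>) * indicator Bc (X \<omega>))" by (rule intYBc)
      show "integrable M (\<lambda>\<omega>. (norm (X \<omega>))\<^sup>2 * indicator Bc (X \<omega>) / R)" using intXB by simp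
      fix \<omega>
      show "\<bar>(\<alpha> \<bullet> X \<omega>) * indicator Bc (X \<omega>)\<bar> \<le> (norm (X \<omega>))\<^sup>2 * indicator Bc (X \<omega>) / R"
      proof (cases "X \<omega> \<in> Bc")
        case True
        then have "R < norm (X \<omega>)" by (simp add: Bc_def)
        then have "R * norm (X \<omega>) \<le> norm (X \<omega>) * norm (X \<omega>)" by (intro mult_right_mono) auto
        then have "norm (X \<omega>) \<le> (norm (X \<omega>))\<^sup>2 / R" using R by (simp add: field_simps power2_eq_square)
        then show ?thesis using True ax[of "X \<omega>"] by simp
      qed simp
    qed
    also have "\<dots> = \<tau> / R" using tau by simp
    finally show ?thesis .
  qed
  have c0tau: "c0\<^sup>2 \<le> (\<tau> / (R * p))\<^sup>2"
  proof -
    have "\<bar>c0\<bar> = \<bar>E1\<bar> / p" using p0 by (simp add: c0_def)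
    also have "\<dots> \<le> (\<tau> / R) / p" by (rule divide_right_mono[OF E1tau]) (use p0 in simp)
    also have "\<dots> = \<tau> / (R * p)" by simp
    finally have "\<bar>c0\<bar> \<le> \<tau> / (R * p)" .
    then have "\<bar>c0\<bar>\<^sup>2 \<le> (\<tau> / (R * p))\<^sup>2" by (intro power_mono) auto
    then show ?thesis by simp
  qed
  have Y2bound: "(\<integral>\<omega>. (Y2 \<omega>)\<^sup>2 \<partial>M) \<le> \<tau> + c0\<^sup>2"
  proof -
    have "(\<integral>\<omega>. (Y2 \<omega>)\<^sup>2 \<partial>M) \<le> (\<integral>\<omega>. (norm (X \<omega>))\<^sup>2 * indicator Bc (X \<omega>) + c0\<^sup>2 \<partial>M)"
    proof (rule integral_mono)
      show "integrable M (\<lambda>\<omega>. (Y2 \<omega>)\<^sup>2)" by (rule Y2sq)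
      show "integrable M (\<lambda>\<omega>. (norm (X \<omega>))\<^sup>2 * indicator Bc (X \<omega>) + c0\<^sup>2)" using intXB by simp
      fix \<omega>
      show "(Y2 \<omega>)\<^sup>2 \<le> (norm (X \<omega>))\<^sup>2 * indicator Bc (X \<omega>) + c0\<^sup>2"
      proof (cases "X \<omega> \<in> B")
        case True
        then have "X \<omega> \<notin> Bc" by (simp add: B_def Bc_def)
        then show ?thesis using True by (simp add: Y2_def \<psi>_def)
      next
        case False
        then have "X \<omega> \<in> Bc" by (simp add: B_def Bc_def)
        moreover have "0 \<le> c0\<^sup>2" by simp
        ultimately show ?thesis using False ax2[of "X \<omega>"] by (simp add: Y2_def \<psi>_def add_increasing2)
      qed
    qed
    also have "\<dots> = \<tau> + c0\<^sup>2" using intXB tau M.prob_space by simp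
    finally show ?thesis .
  qed
  have Zint: "integrable M (\<lambda>\<omega>. (Z \<omega>)\<^sup>2)" by (rule L(1))
  then show "integrable M (\<lambda>\<omega>. (real_cond_exp M (vimage_algebra (space M) (\<lambda>\<omega>. a *\<^sub>R X \<omega> + s *\<^sub>R N \<omega>) borel) (\<lambda>\<omega>. \<alpha> \<bullet> X \<omega>) \<omega>)\<^sup>2)"
    unfolding Z_def F_def T_def[abs_def] .
  have "(\<integral>\<omega>. (Z \<omega>)\<^sup>2 \<partial>M) \<le> 8 * R\<^sup>2 * J / p + 2 * \<tau> + 2 * (\<tau> / (R * p))\<^sup>2"
  proof -
    have "(\<integral>\<omega>. (Z2 \<omega>)\<^sup>2 \<partial>M) \<le> \<tau> + (\<tau> / (R * p))\<^sup>2"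
      using L2(2) Y2bound c0tau by linarith
    then show ?thesis using step1 E_bound unfolding E_def by linarith
  qed
  then show "(\<integral>\<omega>. (real_cond_exp M (vimage_algebra (space M) (\<lambda>\<omega>. a *\<^sub>R X \<omega> + s *\<^sub>R N \<omega>) borel) (\<lambda>\<omega>. \<alpha> \<bullet> X \<omega>) \<omega>)\<^sup>2 \<partial>M)
      \<le> 8 * R\<^sup>2 * (\<integral>y. Jf (a * R / s) y \<partial>(std_gauss :: (real^'n) measure)) / measure M {\<omega>\<in>space M. norm (X \<omega>) \<le> R}
        + 2 * (\<integral>\<omega>. (norm (X \<omega>))\<^sup>2 * indicator {x. R < norm x} (X \<omega>) \<partial>M)
        + 2 * ((\<integral>\<omega>. (norm (X \<omega>))\<^sup>2 * indicator {x. R < norm x} (X \<omega>) \<partial>M) / (R * measure M {\<omega>\<in>space M. norm (X \<omega>) \<le> R}))\<^sup>2"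
    unfolding Z_def F_def T_def[abs_def] J_def p_def \<tau>_def .
qed

lemma tail_small:
  fixes X :: "'a \<Rightarrow> real^'n"
  assumes M: "prob_space M" and X[measurable]: "X \<in> borel_measurable M"
    and X2: "integrable M (\<lambda>\<omega>. (norm (X \<omega>))\<^sup>2)" and d: "0 < d"
  shows "\<exists>R\<ge>1. (\<integral>\<omega>. (norm (X \<omega>))\<^sup>2 * indicator {x. R < norm x} (X \<omega>) \<partial>M) \<le> d"
proof -
  define S where "S n \<omega> = (norm (X \<omega>))\<^sup>2 * indicator {x. real n + 1 < norm x} (X \<omega>)" for n :: nat and \<omega>
  have lim: "(\<lambda>n. \<integral>\<omega>. S n \<omega> \<partial>M) \<longlonglongrightarrow> (\<integral>\<omega>. (\<lambda>_. 0) \<omega> \<partial>M)"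
  proof (rule integral_dominated_convergence[where w="\<lambda>\<omega>. (norm (X \<omega>))\<^sup>2"])
    show "integrable M (\<lambda>\<omega>. (norm (X \<omega>))\<^sup>2)" by (rule X2)
    show "(\<lambda>\<omega>. S n \<omega>) \<in> borel_measurable M" for n unfolding S_def by simp
    show "AE \<omega> in M. norm (S n \<omega>) \<le> (norm (X \<omega>))\<^sup>2" for n
      by (intro AE_I2) (simp add: S_def indicator_def)
    show "AE \<omega> in M. (\<lambda>n. S n \<omega>) \<longlonglongrightarrow> 0"
    proof (intro AE_I2)
      fix \<omega>
      obtain n0 :: nat where "norm (X \<omega>) \<le> real n0" using real_arch_simple by blast
      then have "eventually (\<lambda>n. S n \<omega> = 0) sequentially"
        unfolding eventually_sequentially
        by (intro exI[of _ n0]) (auto simp: S_def indicator_def)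
      then show "(\<lambda>n. S n \<omega>) \<longlonglongrightarrow> 0" by (rule tendsto_eventually)
    qed
  qed simp
  then have "(\<lambda>n. \<integral>\<omega>. S n \<omega> \<partial>M) \<longlonglongrightarrow> 0" by simp
  then have "eventually (\<lambda>n. (\<integral>\<omega>. S n \<omega> \<partial>M) < d) sequentially"
    using order_tendstoD(2) d by blast
  then obtain n where "(\<integral>\<omega>. S n \<omega> \<partial>M) < d" by (auto simp: eventually_sequentially)
  then show ?thesis
    by (intro exI[of _ "real n + 1"]) (auto simp: S_def)
qed

lemma p_lower:
  fixes X :: "'a \<Rightarrow> real^'n"
  assumes M: "prob_space M" and X[measurable]: "X \<in> borel_measurable M"
    and X2: "integrable M (\<lambda>\<omega>. (norm (X \<omega>))\<^sup>2)" and R: "1 \<le> R"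
  shows "1 - (\<integral>\<omega>. (norm (X \<omega>))\<^sup>2 * indicator {x. R < norm x} (X \<omega>) \<partial>M) \<le> measure M {\<omega>\<in>space M. norm (X \<omega>) \<le> R}"
proof -
  interpret prob_space M by (rule M)
  define A where "A = {\<omega>\<in>space M. R < norm (X \<omega>)}"
  have A[measurable]: "A \<in> sets M" unfolding A_def by measurable
  have c: "{\<omega>\<in>space M. norm (X \<omega>) \<le> R} = space M - A" unfolding A_def by auto
  have "measure M A = (\<integral>\<omega>. indicator {x. R < norm x} (X \<omega>) \<partial>M)"
  proof -
    have "(\<integral>\<omega>. indicator {x. R < norm x} (X \<omega>) \<partial>M) = (\<integral>\<omega>. indicator A \<omega> \<partial>M)"
      by (intro Bochner_Integration.integral_cong refl) (auto simp: A_def indicator_def)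
    also have "\<dots> = measure M A" by (simp add: Bochner_Integration.integral_indicator Int_absorb2 A_def)
    finally show ?thesis by simp
  qed
  also have "\<dots> \<le> (\<integral>\<omega>. (norm (X \<omega>))\<^sup>2 * indicator {x. R < norm x} (X \<omega>) \<partial>M)"
  proof (rule integral_mono)
    show "integrable M (\<lambda>\<omega>. indicator {x. R < norm x} (X \<omega>) :: real)"
    proof (rule Bochner_Integration.integrable_bound[OF integrable_const[of 1]])
      show "AE \<omega> in M. norm (indicator {x. R < norm x} (X \<omega>) :: real) \<le> norm (1::real)"
        by (intro AE_I2) (simp add: indicator_def)
    qed simp
    show "integrable M (\<lambda>\<omega>. (norm (X \<omega>))\<^sup>2 * indicator {x. R < norm x} (X \<omega>))"
    proof (rule Bochner_Integration.integrable_bound[OF X2])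
      show "AE \<omega> in M. norm ((norm (X \<omega>))\<^sup>2 * indicator {x. R < norm x} (X \<omega>)) \<le> norm ((norm (X \<omega>))\<^sup>2)"
        by (intro AE_I2) (simp add: indicator_def)
    qed simp
    fix \<omega>
    show "indicator {x. R < norm x} (X \<omega>) \<le> (norm (X \<omega>))\<^sup>2 * indicator {x. R < norm x} (X \<omega>)"
    proof (cases "R < norm (X \<omega>)")
      case True
      then have "1 \<le> norm (X \<omega>)" using R by simp
      then have "1 \<le> (norm (X \<omega>))\<^sup>2" by (simp add: one_le_power)
      then show ?thesis using True by simp
    qed simp
  qed
  finally have "measure M A \<le> (\<integral>\<omega>. (norm (X \<omega>))\<^sup>2 * indicator {x. R < norm x} (X \<omega>) \<partial>M)" .
  moreover have "measure M {\<omega>\<in>space M. norm (X \<omega>) \<le> R} = 1 - measure M A"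
    unfolding c by (rule prob_compl[OF A])
  ultimately show ?thesis by simp
qed

lemma b_small:
  assumes "0 < b0" "0 < R"
  shows "\<exists>t0. \<forall>t\<ge>t0. 0 \<le> t \<and> 0 < sqrt (1 - exp (- 2 * t)) \<and> exp (- t) * R / sqrt (1 - exp (- 2 * t)) \<le> b0"
proof (intro exI[of _ "max 1 (ln (2 * R / b0))"] allI impI conjI)
  fix t :: real assume t: "max 1 (ln (2 * R / b0)) \<le> t"
  then show "0 \<le> t" by simp
  have e2: "exp (- 2 * t) \<le> 1 / 3"
  proof -
    have "exp (- 2 * t) \<le> exp (- 2 :: real)" using t by simp
    also have "exp (- 2 :: real) = 1 / exp 2" by (simp add: exp_minus field_simps)
    also have "\<dots> \<le> 1 / 3"
    proof -
      have "3 \<le> exp (2::real)" using exp_ge_add_one_self[of 2] by simp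
      then show ?thesis by (simp add: field_simps)
    qed
    finally show ?thesis .
  qed
  then have "1 / 4 \<le> 1 - exp (- 2 * t)" by simp
  then have sq: "1 / 2 \<le> sqrt (1 - exp (- 2 * t))"
    using real_sqrt_le_mono[of "1/4" "1 - exp (- 2 * t)"] by (simp add: real_sqrt_divide)
  then show "0 < sqrt (1 - exp (- 2 * t))" by linarith
  have "exp (- t) * R / sqrt (1 - exp (- 2 * t)) \<le> exp (- t) * R / (1 / 2)"
    using sq assms t by (intro divide_left_mono) auto
  also have "\<dots> = 2 * R * exp (- t)" by simp
  also have "\<dots> \<le> b0"
  proof -
    have "ln (2 * R / b0) \<le> t" using t by simp
    then have "exp (ln (2 * R / b0)) \<le> exp t" by simp
    then have "2 * R / b0 \<le> exp t" using assms by simp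
    then have "2 * R \<le> b0 * exp t" using assms by (simp add: field_simps)
    then show ?thesis by (simp add: exp_minus field_simps)
  qed
  finally show "exp (- t) * R / sqrt (1 - exp (- 2 * t)) \<le> b0" .
qed

theorem lemma5p1:
  fixes M :: "'a measure"
    and f :: "real ^ 'n \<Rightarrow> real"
    and X N :: "'a \<Rightarrow> real ^ 'n"
    and \<rho> :: "real \<Rightarrow> ennreal"
  assumes smooth_f: "smooth f"
    and f_nonneg: "\<And>x. f x \<ge> 0"
    and f_prob: "(\<integral>\<^sup>+ x. ennreal (f x) \<partial>std_gauss) = 1"
    and moment2: "(\<integral>\<^sup>+ x. ennreal ((norm x)\<^sup>2 * f x) \<partial>std_gauss) < \<infinity>"
    and fisher: "fisher_info f < \<infinity>"
    and M: "prob_space M"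
    and X_rv: "X \<in> borel_measurable M"
    and N_rv: "N \<in> borel_measurable M"
    and X_law: "distr M borel X = density std_gauss (\<lambda>x. ennreal (f x))"
    and N_law: "distr M borel N = std_gauss"
    and indep: "prob_space.indep_var M borel X borel N"
    and mean0: "(\<integral>\<omega>. X \<omega> \<partial>M) = 0"
    and \<rho>_def: "\<And>t. t \<ge> 0 \<Longrightarrow> \<rho> t =
       (SUP \<alpha>\<in>{\<alpha>::real ^ 'n. norm \<alpha> = 1}.
          \<integral>\<^sup>+ \<omega>. ennreal ((real_cond_exp M
              (vimage_algebra (space M)
                 (\<lambda>\<omega>. exp (- t) *\<^sub>R X \<omega> + sqrt (1 - exp (- 2 * t)) *\<^sub>R N \<omega>) borel)
              (\<lambda>\<omega>. \<alpha> \<bullet> X \<omega>) \<omega>)\<^sup>2) \<partial>M)"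
  shows "(\<rho> \<longlongrightarrow> 0) at_top"
proof -
  interpret M: prob_space M by (rule M)
  note [measurable] = X_rv N_rv
  have fm[measurable]: "f \<in> borel_measurable borel"
  proof -
    have "Ck 0 f" using smooth_f unfolding smooth_def by blast
    then show ?thesis by (simp add: borel_measurable_continuous_onI)
  qed
  have gp: "prob_space (std_gauss :: (real^'n) measure)" using M.prob_space_distr[OF N_rv] N_law by simp
  have X2: "integrable M (\<lambda>\<omega>. (norm (X \<omega>))\<^sup>2)"
  proof (rule integrableI_nonneg)
    show "(\<lambda>\<omega>. (norm (X \<omega>))\<^sup>2) \<in> borel_measurable M" by simp
    show "AE \<omega> in M. 0 \<le> (norm (X \<omega>))\<^sup>2" by simp
    have "(\<integral>\<^sup>+\<omega>. ennreal ((norm (X \<omega>))\<^sup>2) \<partial>M) = (\<integral>\<^sup>+x. ennreal ((norm x)\<^sup>2) \<partial>distr M borel X)"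
      by (subst nn_integral_distr) auto
    also have "\<dots> = (\<integral>\<^sup>+x. ennreal (f x) * ennreal ((norm x)\<^sup>2) \<partial>std_gauss)"
      unfolding X_law by (subst nn_integral_density) auto
    also have "\<dots> = (\<integral>\<^sup>+x. ennreal ((norm x)\<^sup>2 * f x) \<partial>std_gauss)"
      using f_nonneg by (intro nn_integral_cong) (simp add: ennreal_mult[symmetric] mult.commute)
    finally show "(\<integral>\<^sup>+\<omega>. ennreal ((norm (X \<omega>))\<^sup>2) \<partial>M) < \<infinity>" using moment2 by simp
  qed
  have Xi: "integrable M X"
  proof (rule Bochner_Integration.integrable_bound)
    show "integrable M (\<lambda>\<omega>. 1 + (norm (X \<omega>))\<^sup>2)" using X2 by simp
    show "AE \<omega> in M. norm (X \<omega>) \<le> norm (1 + (norm (X \<omega>))\<^sup>2)"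
    proof (intro AE_I2)
      fix \<omega>
      have "\<bar>norm (X \<omega>)\<bar> \<le> 1 + (norm (X \<omega>))\<^sup>2" by (rule abs_le_1_sq)
      then show "norm (X \<omega>) \<le> norm (1 + (norm (X \<omega>))\<^sup>2)" by simp
    qed
  qed simp
  show ?thesis
  proof (rule order_tendstoI)
    fix e :: ennreal assume "e < 0" then show "eventually (\<lambda>t. e < \<rho> t) at_top" by simp
  next
    fix e :: ennreal assume e: "0 < e"
    obtain \<epsilon> :: real where eps: "0 < \<epsilon>" "ennreal \<epsilon> < e"
    proof (cases e)
      case (real r)
      then have "0 < r" using e by (simp add: ennreal_less_zero_iff)
      then show ?thesis using that[of "r / 2"] real by (simp add: ennreal_lessI)
    next
      case top then show ?thesis using that[of 1] by simp
    qed
    define d where "d = min (1/2) (\<epsilon> / 20)"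
    have d: "0 < d" "d \<le> 1/2" "d \<le> \<epsilon> / 20" using eps by (auto simp: d_def)
    obtain R where R: "1 \<le> R" and tauR: "(\<integral>\<omega>. (norm (X \<omega>))\<^sup>2 * indicator {x. R < norm x} (X \<omega>) \<partial>M) \<le> d"
      using tail_small[OF M X_rv X2 d(1)] by blast
    define \<tau> where "\<tau> = (\<integral>\<omega>. (norm (X \<omega>))\<^sup>2 * indicator {x. R < norm x} (X \<omega>) \<partial>M)"
    define p where "p = measure M {\<omega>\<in>space M. norm (X \<omega>) \<le> R}"
    have tau0: "0 \<le> \<tau>" unfolding \<tau>_def by (intro integral_nonneg_AE) (simp add: indicator_def)
    have taud: "\<tau> \<le> d" using tauR by (simp add: \<tau>_def)
    have p2: "1/2 \<le> p" using p_lower[OF M X_rv X2 R] taud d unfolding p_def \<tau>_def by linarith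
    have eJ: "0 < \<epsilon> / (32 * R\<^sup>2)" using eps R by simp
    obtain b0 where b0: "0 < b0" "b0 \<le> 1"
      and Jb: "\<And>b. 0 \<le> b \<Longrightarrow> b \<le> b0 \<Longrightarrow> (\<integral>y. Jf b y \<partial>(std_gauss :: (real^'n) measure)) \<le> \<epsilon> / (32 * R\<^sup>2)"
      using Jf_small[OF gp eJ] by blast
    obtain t0 where t0: "\<And>t. t \<ge> t0 \<Longrightarrow> 0 \<le> t \<and> 0 < sqrt (1 - exp (- 2 * t)) \<and> exp (- t) * R / sqrt (1 - exp (- 2 * t)) \<le> b0"
      using b_small[OF b0(1), of R] R by auto
    show "eventually (\<lambda>t. \<rho> t < e) at_top"
      unfolding eventually_at_top_linorder
    proof (intro exI[of _ t0] allI impI)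
      fix t assume tt: "t0 \<le> t"
      define a where "a = exp (- t)"
      define s where "s = sqrt (1 - exp (- 2 * t))"
      have t0': "0 \<le> t" and s0: "0 < s" and bt: "a * R / s \<le> b0"
        using t0[OF tt] by (auto simp: a_def s_def)
      have a0: "0 \<le> a" by (simp add: a_def)
      have b1: "a * R / s \<le> 1" using bt b0 by simp
      have bnn: "0 \<le> a * R / s" using a0 s0 R by simp
      have J: "(\<integral>y. Jf (a * R / s) y \<partial>(std_gauss :: (real^'n) measure)) \<le> \<epsilon> / (32 * R\<^sup>2)"
        using Jb[OF bnn bt] .
      have J0: "0 \<le> (\<integral>y. Jf (a * R / s) y \<partial>(std_gauss :: (real^'n) measure))"
        by (intro integral_nonneg_AE) (simp add: Jf_nonneg)
      have pp: "0 < measure M {\<omega>\<in>space M. norm (X \<omega>) \<le> R}" using p2 by (simp add: p_def)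
      have each: "(\<integral>\<^sup>+ \<omega>. ennreal ((real_cond_exp M
              (vimage_algebra (space M) (\<lambda>\<omega>. exp (- t) *\<^sub>R X \<omega> + sqrt (1 - exp (- 2 * t)) *\<^sub>R N \<omega>) borel)
              (\<lambda>\<omega>. \<alpha> \<bullet> X \<omega>) \<omega>)\<^sup>2) \<partial>M) \<le> ennreal \<epsilon>" if \<alpha>: "norm \<alpha> = 1" for \<alpha> :: "real^'n"
      proof -
        note FB = fixed_bound[OF M X_rv N_rv N_law indep Xi X2 mean0 \<alpha> a0 s0 R b1 pp]
        define V where "V = (\<integral>\<omega>. (real_cond_exp M (vimage_algebra (space M) (\<lambda>\<omega>. a *\<^sub>R X \<omega> + s *\<^sub>R N \<omega>) borel) (\<lambda>\<omega>. \<alpha> \<bullet> X \<omega>) \<omega>)\<^sup>2 \<partial>M)"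
        have "V \<le> 8 * R\<^sup>2 * (\<integral>y. Jf (a * R / s) y \<partial>(std_gauss :: (real^'n) measure)) / p + 2 * \<tau> + 2 * (\<tau> / (R * p))\<^sup>2"
          using FB(2) unfolding V_def p_def \<tau>_def .
        also have "\<dots> \<le> \<epsilon>"
        proof -
          have "8 * R\<^sup>2 * (\<integral>y. Jf (a * R / s) y \<partial>(std_gauss :: (real^'n) measure)) / p
                \<le> 8 * R\<^sup>2 * (\<epsilon> / (32 * R\<^sup>2)) / (1/2)"
            using J J0 p2 R eps(1) by (intro frac_le mult_left_mono) auto
          also have "\<dots> = \<epsilon> / 2" using R by (simp add: field_simps power2_eq_square)
          finally have 1: "8 * R\<^sup>2 * (\<integral>y. Jf (a * R / s) y \<partial>(std_gauss :: (real^'n) measure)) / p \<le> \<epsilon> / 2" .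
          have "\<tau> / (R * p) \<le> 2 * \<tau>"
          proof -
            have "1 * p \<le> R * p" using R p2 by (intro mult_right_mono) auto
            then have "1/2 \<le> R * p" using p2 by linarith
            then have "\<tau> / (R * p) \<le> \<tau> / (1/2)" using tau0 by (intro divide_left_mono) auto
            then show ?thesis by simp
          qed
          moreover have "0 \<le> \<tau> / (R * p)" using tau0 R p2 by simp
          ultimately have "(\<tau> / (R * p))\<^sup>2 \<le> (2 * \<tau>)\<^sup>2" by (intro power_mono) auto
          also have "(2 * \<tau>)\<^sup>2 \<le> 4 * \<tau>"
          proof -
            have "\<tau> * \<tau> \<le> \<tau> * 1" using tau0 taud d by (intro mult_left_mono) auto
            then show ?thesis by (simp add: power2_eq_square)
          qed
          finally have 2: "(\<tau> / (R * p))\<^sup>2 \<le> 4 * \<tau>" .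
          show ?thesis using 1 2 taud d by linarith
        qed
        finally have Vle: "V \<le> \<epsilon>" .
        have "(\<integral>\<^sup>+ \<omega>. ennreal ((real_cond_exp M (vimage_algebra (space M) (\<lambda>\<omega>. a *\<^sub>R X \<omega> + s *\<^sub>R N \<omega>) borel) (\<lambda>\<omega>. \<alpha> \<bullet> X \<omega>) \<omega>)\<^sup>2) \<partial>M) = ennreal V"
          unfolding V_def by (rule nn_integral_eq_integral[OF FB(1)]) simp
        then show ?thesis using ennreal_leI[OF Vle] by (simp add: a_def s_def)
      qed
      have "\<rho> t \<le> ennreal \<epsilon>"
        unfolding \<rho>_def[OF t0'] by (intro SUP_least each) simp
      then show "\<rho> t < e" using eps(2) by (rule le_less_trans)
    qed
  qed
qed

end
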